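(* Let $S$ be a countable discrete inverse semigroup with identity, $\alpha\colon S\to\mathcal I(X)$ a representation and $\phi\colon\mathcal R_X\to\mathbb C$ a bounded linear functional with $\phi(AB)=\phi(BA)$ for all $A,B\in\mathcal R_X$. Then $\phi(T)=\phi(\mathcal E(T))$ for every $T\in\mathcal R_X$.
   Context: Inverse semigroup: each $s$ has a unique $s^*$ with $ss^*s=s$, $s^*ss^*=s^*$. A representation is a unital homomorphism $\alpha\colon S\to\mathcal I(X)$ into partial bijections of $X$; $D_{s^*s}$ is the domain of $\alpha_s$. On $\ell^2(X)$ with basis $\{\delta_x\}$, $V_s\delta_x=\delta_{\alpha_s(x)}$ if $x\in D_{s^*s}$, else $0$; $\ell^\infty(X)$ acts by multiplication operators; $\mathcal R_X$ is the C*-algebra generated by $\{V_s\}\cup\ell^\infty(X)$. $\mathcal E\colon\mathcal B(\ell^2(X))\to\ell^\infty(X)$ is the conditional expectation $\mathcal E(T)=\sum_{x\in X}P_{\{x\}}TP_{\{x\}}$ (strong operator topology), where $P_{\{x\}}$ is the projection onto $\mathbb C\delta_x$. *)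

theory Defs
  imports "HOL-Analysis.Analysis"
begin

type_synonym 'x vec = "'x \<Rightarrow> complex"
type_synonym 'x op = "'x vec \<Rightarrow> 'x vec"

definition ell2 :: "'x vec set" where
  "ell2 = {f. (\<lambda>x. (cmod (f x))^2) summable_on UNIV}"

definition l2norm :: "'x vec \<Rightarrow> real" where
  "l2norm f = sqrt (infsum (\<lambda>x. (cmod (f x))^2) UNIV)"

definition l2inner :: "'x vec \<Rightarrow> 'x vec \<Rightarrow> complex" where
  "l2inner f g = infsum (\<lambda>x. cnj (f x) * g x) UNIV"

text \<open>An operator is a function on all of 'x vec
  which is linear and bounded on l2, maps l2 to l2, and is 0 off l2
  (normalisation so that operators are determined by their action on l2).\<close>

definition is_bounded_op :: "'x op \<Rightarrow> bool" where
  "is_bounded_op T \<longleftrightarrow>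
     (\<forall>f. f \<notin> ell2 \<longrightarrow> T f = (\<lambda>_. 0)) \<and>
     (\<forall>f\<in>ell2. T f \<in> ell2) \<and>
     (\<forall>f\<in>ell2. \<forall>g\<in>ell2. \<forall>a b.
        T (\<lambda>x. a * f x + b * g x) = (\<lambda>x. a * T f x + b * T g x)) \<and>
     (\<exists>K. \<forall>f\<in>ell2. l2norm (T f) \<le> K * l2norm f)"

definition opnorm :: "'x op \<Rightarrow> real" where
  "opnorm T = Sup {l2norm (T f) | f. f \<in> ell2 \<and> l2norm f \<le> 1}"

definition op_plus :: "'x op \<Rightarrow> 'x op \<Rightarrow> 'x op" where
  "op_plus A B = (\<lambda>f x. A f x + B f x)"

definition op_minus :: "'x op \<Rightarrow> 'x op \<Rightarrow> 'x op" where
  "op_minus A B = (\<lambda>f x. A f x - B f x)"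

definition op_scale :: "complex \<Rightarrow> 'x op \<Rightarrow> 'x op" where
  "op_scale c A = (\<lambda>f x. c * A f x)"

text \<open>Operator product is composition \<open>A \<circ> B\<close>.\<close>

definition adj :: "'x op \<Rightarrow> 'x op" where
  "adj T = (SOME T'. is_bounded_op T' \<and>
              (\<forall>f\<in>ell2. \<forall>g\<in>ell2. l2inner (T f) g = l2inner f (T' g)))"

definition is_cstar_subalg :: "'x op set \<Rightarrow> bool" where
  "is_cstar_subalg A \<longleftrightarrow>
     A \<subseteq> {T. is_bounded_op T} \<and>
     (\<forall>S\<in>A. \<forall>T\<in>A. op_plus S T \<in> A) \<and>
     (\<forall>c. \<forall>T\<in>A. op_scale c T \<in> A) \<and>
     (\<forall>S\<in>A. \<forall>T\<in>A. S \<circ> T \<in> A) \<and>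
     (\<forall>T\<in>A. adj T \<in> A) \<and>
     (\<forall>T. is_bounded_op T \<and> (\<forall>\<epsilon>>0. \<exists>B\<in>A. opnorm (op_minus T B) < \<epsilon>) \<longrightarrow> T \<in> A)"

definition cstar_gen :: "'x op set \<Rightarrow> 'x op set" where
  "cstar_gen G = \<Inter>{A. is_cstar_subalg A \<and> G \<subseteq> A}"

definition linfty :: "'x vec set" where
  "linfty = {g. \<exists>K. \<forall>x. cmod (g x) \<le> K}"

definition mult_op :: "'x vec \<Rightarrow> 'x op" where
  "mult_op g f = (if f \<in> ell2 then (\<lambda>x. g x * f x) else (\<lambda>_. 0))"

text \<open>V_s delta_x = delta_{alpha_s x} for x in the domain of alpha_s, else 0,
  extended linearly and continuously.\<close>
definition Vop :: "('s \<Rightarrow> ('x \<rightharpoonup> 'x)) \<Rightarrow> 's \<Rightarrow> 'x op" where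
  "Vop \<alpha> s f = (if f \<in> ell2 then
      (\<lambda>y. if \<exists>x. \<alpha> s x = Some y then f (THE x. \<alpha> s x = Some y) else 0)
    else (\<lambda>_. 0))"

definition RX :: "('s \<Rightarrow> ('x \<rightharpoonup> 'x)) \<Rightarrow> 'x op set" where
  "RX \<alpha> = cstar_gen (range (Vop \<alpha>) \<union> mult_op ` linfty)"

definition proj :: "'x \<Rightarrow> 'x op" where
  "proj x f = (if f \<in> ell2 then (\<lambda>y. if y = x then f x else 0) else (\<lambda>_. 0))"

text \<open>E(T) = sum over x of P_x T P_x, the sum converging in the strong operator
  topology: E(T) f is the l2-limit of the net of finite partial sums.\<close>
definition condexp :: "'x op \<Rightarrow> 'x op" where
  "condexp T f = (if f \<in> ell2 then
      (THE g. g \<in> ell2 \<and> (\<forall>\<epsilon>>0. \<exists>F0. finite F0 \<and>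
          (\<forall>F. finite F \<and> F0 \<subseteq> F \<longrightarrow>
             l2norm (\<lambda>y. (\<Sum>x\<in>F. proj x (T (proj x f)) y) - g y) < \<epsilon>)))
    else (\<lambda>_. 0))"

end

theory Submission
  imports Defs
begin


lemma sq_nonneg_cm: "0 \<le> (cmod z)^2" by simp

lemma ell2_finite_le:
  assumes "f \<in> ell2" "finite F"
  shows "(\<Sum>x\<in>F. (cmod (f x))^2) \<le> infsum (\<lambda>x. (cmod (f x))^2) UNIV"
  using assms by (intro finite_sum_le_infsum) (auto simp: ell2_def)

lemma ell2_bddI:
  assumes "\<And>F. finite F \<Longrightarrow> (\<Sum>x\<in>F. (cmod (f x))^2) \<le> C"
  shows "f \<in> ell2" "infsum (\<lambda>x. (cmod (f x))^2) UNIV \<le> C"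
proof -
  have "(\<lambda>x. (cmod (f x))^2) summable_on UNIV"
    by (rule nonneg_bdd_above_summable_on) (use assms in \<open>auto simp: bdd_above_def\<close>)
  then show "f \<in> ell2" by (simp add: ell2_def)
  show "infsum (\<lambda>x. (cmod (f x))^2) UNIV \<le> C"
    by (rule infsum_le_finite_sums) (use \<open>_ summable_on _\<close> assms in auto)
qed

lemma L2_le_l2norm:
  assumes "f \<in> ell2" "finite F"
  shows "L2_set (\<lambda>x. cmod (f x)) F \<le> l2norm f"
  unfolding L2_set_def l2norm_def using ell2_finite_le[OF assms] by simp

lemma l2norm_leI:
  assumes "\<And>F. finite F \<Longrightarrow> L2_set (\<lambda>x. cmod (f x)) F \<le> C"
  shows "f \<in> ell2" "l2norm f \<le> C"
proof -
  have C0: "0 \<le> C" using assms[of "{}"] by simp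
  have b: "(\<Sum>x\<in>F. (cmod (f x))^2) \<le> C^2" if "finite F" for F
  proof -
    have "sqrt (\<Sum>x\<in>F. (cmod (f x))^2) \<le> C" using assms[OF that] by (simp add: L2_set_def)
    moreover have "0 \<le> (\<Sum>x\<in>F. (cmod (f x))^2)" by (simp add: sum_nonneg)
    ultimately show ?thesis using C0 by (simp add: real_sqrt_le_iff real_le_lsqrt sqrt_le_D)
  qed
  show "f \<in> ell2" using ell2_bddI(1)[OF b] .
  have "infsum (\<lambda>x. (cmod (f x))^2) UNIV \<le> C^2" using ell2_bddI(2)[OF b] .
  then show "l2norm f \<le> C" unfolding l2norm_def using C0
    by (simp add: real_sqrt_le_iff real_le_lsqrt sqrt_le_D real_sqrt_le_mono[of _ "C^2", simplified])
qed

lemma l2norm_nonneg[simp]: "0 \<le> l2norm f"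
  unfolding l2norm_def by (simp add: infsum_nonneg)

lemma cmod_le_l2norm: "f \<in> ell2 \<Longrightarrow> cmod (f x) \<le> l2norm f"
  using L2_le_l2norm[of f "{x}"] by (simp add: L2_set_def)

lemma l2norm_eq0: "f \<in> ell2 \<Longrightarrow> l2norm f = 0 \<Longrightarrow> f = (\<lambda>_. 0)"
proof (rule ext)
  fix x assume "f \<in> ell2" "l2norm f = 0"
  then show "f x = 0" using cmod_le_l2norm[of f x] by simp
qed

lemma l2norm_zero[simp]: "l2norm (\<lambda>_. 0) = 0"
  by (simp add: l2norm_def)

lemma zero_ell2[simp]: "(\<lambda>_. 0) \<in> ell2"
  by (simp add: ell2_def)

lemma l2norm_dom:
  assumes "g \<in> ell2" "\<And>x. cmod (f x) \<le> cmod (g x)"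
  shows "f \<in> ell2" "l2norm f \<le> l2norm g"
proof -
  have "L2_set (\<lambda>x. cmod (f x)) F \<le> l2norm g" if "finite F" for F
  proof -
    have "L2_set (\<lambda>x. cmod (f x)) F \<le> L2_set (\<lambda>x. cmod (g x)) F"
      by (rule L2_set_mono) (use assms in auto)
    then show ?thesis using L2_le_l2norm[OF assms(1) that] by linarith
  qed
  then show "f \<in> ell2" "l2norm f \<le> l2norm g" using l2norm_leI[of f "l2norm g"] by auto
qed

lemma l2norm_add:
  assumes "f \<in> ell2" "g \<in> ell2"
  shows "(\<lambda>x. f x + g x) \<in> ell2" "l2norm (\<lambda>x. f x + g x) \<le> l2norm f + l2norm g"
proof -
  have "L2_set (\<lambda>x. cmod (f x + g x)) F \<le> l2norm f + l2norm g" if "finite F" for F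
  proof -
    have "L2_set (\<lambda>x. cmod (f x + g x)) F \<le> L2_set (\<lambda>x. cmod (f x) + cmod (g x)) F"
      by (rule L2_set_mono) (auto simp: norm_triangle_ineq)
    also have "\<dots> \<le> L2_set (\<lambda>x. cmod (f x)) F + L2_set (\<lambda>x. cmod (g x)) F"
      by (rule L2_set_triangle_ineq)
    also have "\<dots> \<le> l2norm f + l2norm g"
      using L2_le_l2norm[OF assms(1) that] L2_le_l2norm[OF assms(2) that] by simp
    finally show ?thesis .
  qed
  then show "(\<lambda>x. f x + g x) \<in> ell2" "l2norm (\<lambda>x. f x + g x) \<le> l2norm f + l2norm g"
    using l2norm_leI[of "\<lambda>x. f x + g x" "l2norm f + l2norm g"] by auto
qed

lemma l2norm_scale:
  assumes "f \<in> ell2"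
  shows "(\<lambda>x. c * f x) \<in> ell2" "l2norm (\<lambda>x. c * f x) = cmod c * l2norm f"
proof -
  have s: "(\<lambda>x. (cmod (f x))^2) summable_on UNIV" using assms by (simp add: ell2_def)
  have e: "(\<lambda>x. (cmod (c * f x))^2) = (\<lambda>x. (cmod c)^2 * (cmod (f x))^2)"
    by (simp add: norm_mult power_mult_distrib)
  have "(\<lambda>x. (cmod c)^2 * (cmod (f x))^2) summable_on UNIV" by (rule summable_on_cmult_right[OF s])
  then show "(\<lambda>x. c * f x) \<in> ell2" using e by (simp add: ell2_def)
  have "infsum (\<lambda>x. (cmod (c * f x))^2) UNIV = (cmod c)^2 * infsum (\<lambda>x. (cmod (f x))^2) UNIV"
    unfolding e by (rule infsum_cmult_right) (use s in auto)
  then show "l2norm (\<lambda>x. c * f x) = cmod c * l2norm f"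
    unfolding l2norm_def by (simp add: real_sqrt_mult)
qed

lemma l2norm_minus:
  assumes "f \<in> ell2" "g \<in> ell2"
  shows "(\<lambda>x. f x - g x) \<in> ell2" "l2norm (\<lambda>x. f x - g x) \<le> l2norm f + l2norm g"
proof -
  have "(\<lambda>x. (-1) * g x) \<in> ell2" "l2norm (\<lambda>x. (-1) * g x) = l2norm g"
    using l2norm_scale[OF assms(2), of "-1"] by auto
  then show "(\<lambda>x. f x - g x) \<in> ell2" "l2norm (\<lambda>x. f x - g x) \<le> l2norm f + l2norm g"
    using l2norm_add[OF assms(1), of "\<lambda>x. (-1) * g x"] by auto
qed

lemma l2norm_neg: "l2norm (\<lambda>x. - f x) = l2norm f"
  by (simp add: l2norm_def)

lemma l2norm_tri:
  assumes "f \<in> ell2" "g \<in> ell2" "h \<in> ell2"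
  shows "l2norm (\<lambda>x. f x - h x) \<le> l2norm (\<lambda>x. f x - g x) + l2norm (\<lambda>x. g x - h x)"
proof -
  have "(\<lambda>x. f x - h x) = (\<lambda>x. (f x - g x) + (g x - h x))" by auto
  then show ?thesis using l2norm_add[OF l2norm_minus(1)[OF assms(1,2)] l2norm_minus(1)[OF assms(2,3)]]
    by simp
qed

lemma l2norm_finite_supp:
  assumes "finite F"
  shows "(\<lambda>x. if x \<in> F then c x else 0) \<in> ell2"
    "l2norm (\<lambda>x. if x \<in> F then c x else 0) = L2_set (\<lambda>x. cmod (c x)) F"
proof -
  have "infsum (\<lambda>x. (cmod (if x \<in> F then c x else 0))^2) UNIV = infsum (\<lambda>x. (cmod (c x))^2) F"
    by (rule infsum_cong_neutral) auto
  also have "\<dots> = (\<Sum>x\<in>F. (cmod (c x))^2)" using assms by simp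
  finally show "l2norm (\<lambda>x. if x \<in> F then c x else 0) = L2_set (\<lambda>x. cmod (c x)) F"
    by (simp add: l2norm_def L2_set_def)
  have "(\<lambda>x. (cmod (if x \<in> F then c x else 0))^2) summable_on UNIV"
  proof -
    have "(\<lambda>x. (cmod (if x \<in> F then c x else 0))^2) summable_on UNIV \<longleftrightarrow> (\<lambda>x. (cmod (c x))^2) summable_on F"
      by (rule summable_on_cong_neutral) auto
    then show ?thesis using assms by simp
  qed
  then show "(\<lambda>x. if x \<in> F then c x else 0) \<in> ell2" by (simp add: ell2_def)
qed




lemma inner_summable:
  assumes "f \<in> ell2" "g \<in> ell2"
  shows "(\<lambda>x. cnj (f x) * g x) summable_on UNIV"
    "(\<lambda>x. cmod (f x) * cmod (g x)) summable_on UNIV"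
proof -
  have s1: "(\<lambda>x. (cmod (f x))^2) summable_on UNIV" using assms(1) unfolding ell2_def by simp
  have s2: "(\<lambda>x. (cmod (g x))^2) summable_on UNIV" using assms(2) unfolding ell2_def by simp
  have s: "(\<lambda>x. (cmod (f x))^2 + (cmod (g x))^2) summable_on UNIV"
    using summable_on_add[OF s1 s2] .
  have le: "norm (cnj (f x) * g x) \<le> norm ((cmod (f x))^2 + (cmod (g x))^2)" for x
  proof -
    have "2 * cmod (f x) * cmod (g x) \<le> (cmod (f x))^2 + (cmod (g x))^2" by (rule sum_squares_bound)
    moreover have "0 \<le> cmod (f x) * cmod (g x)" by simp
    moreover have "norm (cnj (f x) * g x) = cmod (f x) * cmod (g x)" by (simp add: norm_mult)
    moreover have "norm ((cmod (f x))^2 + (cmod (g x))^2) = (cmod (f x))^2 + (cmod (g x))^2" by simp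
    ultimately show ?thesis by linarith
  qed
  have nq: "(\<lambda>x. norm ((cmod (f x))^2 + (cmod (g x))^2)) = (\<lambda>x. (cmod (f x))^2 + (cmod (g x))^2)"
    by (rule ext) simp
  have s': "(\<lambda>x. norm ((cmod (f x))^2 + (cmod (g x))^2)) summable_on UNIV"
    unfolding nq using s .
  have a: "(\<lambda>x. norm (cnj (f x) * g x)) summable_on UNIV"
    by (rule Infinite_Sum.abs_summable_on_comparison_test[OF s' le])
  then show "(\<lambda>x. cnj (f x) * g x) summable_on UNIV" by (rule abs_summable_summable)
  show "(\<lambda>x. cmod (f x) * cmod (g x)) summable_on UNIV" using a by (simp add: norm_mult)
qed

lemma cauchy_schwarz:
  assumes "f \<in> ell2" "g \<in> ell2"
  shows "cmod (l2inner f g) \<le> l2norm f * l2norm g"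
proof -
  note s = inner_summable[OF assms]
  have "cmod (l2inner f g) \<le> infsum (\<lambda>x. cmod (f x) * cmod (g x)) UNIV"
    unfolding l2inner_def
    by (rule norm_infsum_le[OF has_sum_infsum[OF s(1)] has_sum_infsum[OF s(2)]]) (simp add: norm_mult)
  also have "\<dots> \<le> l2norm f * l2norm g"
  proof (rule infsum_le_finite_sums[OF s(2)])
    fix F :: "'a set" assume F: "finite F"
    have "(\<Sum>x\<in>F. cmod (f x) * cmod (g x)) = (\<Sum>x\<in>F. \<bar>cmod (f x)\<bar> * \<bar>cmod (g x)\<bar>)" by simp
    also have "\<dots> \<le> L2_set (\<lambda>x. cmod (f x)) F * L2_set (\<lambda>x. cmod (g x)) F"
      by (rule L2_set_mult_ineq)
    also have "\<dots> \<le> l2norm f * l2norm g"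
      by (intro mult_mono L2_le_l2norm assms F) auto
    finally show "(\<Sum>x\<in>F. cmod (f x) * cmod (g x)) \<le> l2norm f * l2norm g" .
  qed
  finally show ?thesis .
qed

lemma l2inner_lin2:
  assumes "f \<in> ell2" "g \<in> ell2" "h \<in> ell2"
  shows "l2inner f (\<lambda>x. a * g x + b * h x) = a * l2inner f g + b * l2inner f h"
proof -
  have e: "(\<lambda>x. cnj (f x) * (a * g x + b * h x)) = (\<lambda>x. a * (cnj (f x) * g x) + b * (cnj (f x) * h x))"
    by (rule ext) (simp add: distrib_left mult.left_commute)
  have s1: "(\<lambda>x. a * (cnj (f x) * g x)) summable_on UNIV"
    by (rule summable_on_cmult_right) (rule inner_summable(1)[OF assms(1,2)])
  have s2: "(\<lambda>x. b * (cnj (f x) * h x)) summable_on UNIV"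
    by (rule summable_on_cmult_right) (rule inner_summable(1)[OF assms(1,3)])
  show ?thesis unfolding l2inner_def e infsum_add[OF s1 s2] infsum_cmult_right' ..
qed

lemma l2inner_lin1:
  assumes "f \<in> ell2" "g \<in> ell2" "h \<in> ell2"
  shows "l2inner (\<lambda>x. a * f x + b * g x) h = cnj a * l2inner f h + cnj b * l2inner g h"
proof -
  have e: "(\<lambda>x. cnj (a * f x + b * g x) * h x) = (\<lambda>x. cnj a * (cnj (f x) * h x) + cnj b * (cnj (g x) * h x))"
    by (rule ext) (simp add: distrib_right mult.assoc)
  have s1: "(\<lambda>x. cnj a * (cnj (f x) * h x)) summable_on UNIV"
    by (rule summable_on_cmult_right) (rule inner_summable(1)[OF assms(1,3)])
  have s2: "(\<lambda>x. cnj b * (cnj (g x) * h x)) summable_on UNIV"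
    by (rule summable_on_cmult_right) (rule inner_summable(1)[OF assms(2,3)])
  show ?thesis unfolding l2inner_def e infsum_add[OF s1 s2] infsum_cmult_right' ..
qed

lemma l2inner_diff1:
  assumes "f \<in> ell2" "g \<in> ell2" "h \<in> ell2"
  shows "l2inner (\<lambda>x. f x - g x) h = l2inner f h - l2inner g h"
  using l2inner_lin1[OF assms, of 1 "-1"] by simp

lemma l2inner_diff2:
  assumes "f \<in> ell2" "g \<in> ell2" "h \<in> ell2"
  shows "l2inner f (\<lambda>x. g x - h x) = l2inner f g - l2inner f h"
  using l2inner_lin2[OF assms, of 1 "-1"] by simp

lemma l2inner_delta:
  "l2inner (\<lambda>y. if y = x then c else 0) g = cnj c * g x"
proof -
  have "l2inner (\<lambda>y. if y = x then c else 0) g = infsum (\<lambda>y. cnj (if y = x then c else 0) * g y) {x}"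
    unfolding l2inner_def by (rule infsum_cong_neutral) auto
  then show ?thesis by simp
qed

lemma tail_small:
  assumes "f \<in> ell2" "0 < \<epsilon>"
  shows "\<exists>F0. finite F0 \<and> (\<forall>F. finite F \<and> F0 \<subseteq> F \<longrightarrow> l2norm (\<lambda>x. if x \<in> F then 0 else f x) < \<epsilon>)"
proof -
  define q where "q x = (cmod (f x))^2" for x
  define S where "S = infsum q UNIV"
  have sq: "q summable_on UNIV" using assms(1) by (simp add: ell2_def q_def[abs_def])
  have "(sum q \<longlongrightarrow> S) (finite_subsets_at_top UNIV)" unfolding S_def by (rule infsum_tendsto[OF sq])
  then have "eventually (\<lambda>F. dist (sum q F) S < \<epsilon>^2) (finite_subsets_at_top UNIV)"
    using assms(2) by (simp add: tendsto_iff)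
  then have "\<exists>X. finite X \<and> X \<subseteq> UNIV \<and> (\<forall>Y. finite Y \<and> X \<subseteq> Y \<and> Y \<subseteq> UNIV \<longrightarrow> dist (sum q Y) S < \<epsilon>^2)"
    by (simp only: eventually_finite_subsets_at_top)
  then obtain F0 where F0a: "finite F0" and
      F0b: "\<forall>Y. finite Y \<and> F0 \<subseteq> Y \<and> Y \<subseteq> UNIV \<longrightarrow> dist (sum q Y) S < \<epsilon>^2"
    by (elim exE conjE)
  have F0: "finite F0" "\<And>F. finite F \<Longrightarrow> F0 \<subseteq> F \<Longrightarrow> dist (sum q F) S < \<epsilon>^2"
    using F0a F0b by auto
  have "l2norm (\<lambda>x. if x \<in> F then 0 else f x) < \<epsilon>" if F: "finite F" "F0 \<subseteq> F" for F
  proof -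
    have d: "S - sum q F < \<epsilon>^2" using F0(2)[OF F] by (simp add: dist_real_def)
    have bnd: "L2_set (\<lambda>x. cmod (if x \<in> F then 0 else f x)) G \<le> sqrt (S - sum q F)" if G: "finite G" for G
    proof -
      define t where "t x = (cmod (if x \<in> F then 0 else f x))^2" for x
      have fin: "finite (G \<union> F)" using F G by simp
      have "(\<Sum>x\<in>G. t x) \<le> (\<Sum>x\<in>G \<union> F. t x)"
        by (rule sum_mono2[OF fin]) (auto simp: t_def)
      also have "\<dots> = (\<Sum>x\<in>(G \<union> F) - F. t x) + (\<Sum>x\<in>F. t x)"
        by (rule sum.subset_diff[OF _ fin]) auto
      also have "(\<Sum>x\<in>F. t x) = 0" by (rule sum.neutral) (simp add: t_def)
      also have "(\<Sum>x\<in>(G \<union> F) - F. t x) = (\<Sum>x\<in>(G \<union> F) - F. q x)"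
        by (rule sum.cong) (auto simp: t_def q_def)
      also have "(\<Sum>x\<in>G \<union> F. q x) = (\<Sum>x\<in>(G \<union> F) - F. q x) + (\<Sum>x\<in>F. q x)"
        by (rule sum.subset_diff[OF _ fin]) auto
      moreover have "(\<Sum>x\<in>G \<union> F. q x) \<le> S" unfolding S_def
        by (rule finite_sum_le_infsum[OF sq fin]) (auto simp: q_def)
      ultimately have "(\<Sum>x\<in>G. t x) \<le> S - sum q F" by linarith
      then show ?thesis unfolding L2_set_def t_def by (rule real_sqrt_le_mono)
    qed
    have "l2norm (\<lambda>x. if x \<in> F then 0 else f x) \<le> sqrt (S - sum q F)"
      by (rule l2norm_leI(2)) (rule bnd)
    also have "\<dots> < sqrt (\<epsilon>^2)" using d by (rule real_sqrt_less_mono)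
    also have "\<dots> = \<epsilon>" using assms(2) by simp
    finally show ?thesis .
  qed
  then show ?thesis using F0(1) by blast
qed




definition zop :: "'x op" where "zop = (\<lambda>f x. 0)"

lemma bop_out: "is_bounded_op T \<Longrightarrow> f \<notin> ell2 \<Longrightarrow> T f = (\<lambda>_. 0)"
  unfolding is_bounded_op_def by blast

lemma bop_ell2: "is_bounded_op T \<Longrightarrow> f \<in> ell2 \<Longrightarrow> T f \<in> ell2"
  unfolding is_bounded_op_def by blast

lemma bop_lin: "is_bounded_op T \<Longrightarrow> f \<in> ell2 \<Longrightarrow> g \<in> ell2 \<Longrightarrow>
    T (\<lambda>x. a * f x + b * g x) = (\<lambda>x. a * T f x + b * T g x)"
  unfolding is_bounded_op_def by blast

lemma bop_K: "is_bounded_op T \<Longrightarrow> \<exists>K\<ge>0. \<forall>f\<in>ell2. l2norm (T f) \<le> K * l2norm f"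
proof -
  assume "is_bounded_op T"
  then obtain K where K: "\<forall>f\<in>ell2. l2norm (T f) \<le> K * l2norm f"
    unfolding is_bounded_op_def by blast
  have "\<forall>f\<in>ell2. l2norm (T f) \<le> max K 0 * l2norm f"
  proof
    fix f :: "'a vec" assume "f \<in> ell2"
    then have "l2norm (T f) \<le> K * l2norm f" using K by blast
    also have "\<dots> \<le> max K 0 * l2norm f" by (intro mult_right_mono) auto
    finally show "l2norm (T f) \<le> max K 0 * l2norm f" .
  qed
  then show ?thesis by (intro exI[of _ "max K 0"]) auto
qed

lemma bop_zero: "is_bounded_op T \<Longrightarrow> T (\<lambda>_. 0) = (\<lambda>_. 0)"
  using bop_lin[of T "\<lambda>_. 0" "\<lambda>_. 0" 0 0] by simp

lemma bop_scale: "is_bounded_op T \<Longrightarrow> f \<in> ell2 \<Longrightarrow> T (\<lambda>x. c * f x) = (\<lambda>x. c * T f x)"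
  using bop_lin[of T f f c 0] by simp

lemma bop_add: "is_bounded_op T \<Longrightarrow> f \<in> ell2 \<Longrightarrow> g \<in> ell2 \<Longrightarrow> T (\<lambda>x. f x + g x) = (\<lambda>x. T f x + T g x)"
  using bop_lin[of T f g 1 1] by simp

lemma bop_diff: "is_bounded_op T \<Longrightarrow> f \<in> ell2 \<Longrightarrow> g \<in> ell2 \<Longrightarrow> T (\<lambda>x. f x - g x) = (\<lambda>x. T f x - T g x)"
  using bop_lin[of T f g 1 "-1"] by simp

lemma opnorm_facts:
  assumes T: "is_bounded_op T"
  shows "0 \<le> opnorm T" "\<And>f. f \<in> ell2 \<Longrightarrow> l2norm (T f) \<le> opnorm T * l2norm f"
proof -
  define S where "S = {l2norm (T f) | f. f \<in> ell2 \<and> l2norm f \<le> 1}"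
  obtain K where K: "K \<ge> 0" "\<forall>f\<in>ell2. l2norm (T f) \<le> K * l2norm f" using bop_K[OF T] by blast
  have bdd: "bdd_above S"
  proof (rule bdd_aboveI)
    fix y assume "y \<in> S"
    then obtain f where f: "y = l2norm (T f)" "f \<in> ell2" "l2norm f \<le> 1" unfolding S_def by blast
    have "y \<le> K * l2norm f" using K f by blast
    also have "\<dots> \<le> K * 1" using K(1) f(3) by (intro mult_left_mono) auto
    finally show "y \<le> K" by simp
  qed
  have z: "0 \<in> S" unfolding S_def using bop_zero[OF T] by (intro CollectI exI[of _ "\<lambda>_. 0"]) simp
  have on: "opnorm T = Sup S" unfolding opnorm_def S_def ..
  show nn: "0 \<le> opnorm T" unfolding on by (rule cSup_upper[OF z bdd])
  fix f :: "'a vec" assume f: "f \<in> ell2"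
  show "l2norm (T f) \<le> opnorm T * l2norm f"
  proof (cases "l2norm f = 0")
    case True
    then have "f = (\<lambda>_. 0)" using l2norm_eq0[OF f] by blast
    then show ?thesis using bop_zero[OF T] nn by simp
  next
    case False
    define n where "n = l2norm f"
    have n: "n > 0" using False l2norm_nonneg[of f] unfolding n_def by linarith
    define u where "u = (\<lambda>x. complex_of_real (1/n) * f x)"
    have cm: "cmod (1 / complex_of_real n) = 1/n" using n by (simp add: norm_divide)
    have u: "u \<in> ell2" "l2norm u = 1"
      unfolding u_def using l2norm_scale[OF f, of "complex_of_real (1/n)"] n cm
      by (simp_all only: n_def[symmetric]) (simp add: field_simps)
    have "l2norm (T u) \<in> S" unfolding S_def using u by auto
    then have "l2norm (T u) \<le> opnorm T" unfolding on by (rule cSup_upper[OF _ bdd])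
    moreover have "T u = (\<lambda>x. complex_of_real (1/n) * T f x)" unfolding u_def by (rule bop_scale[OF T f])
    moreover have "l2norm (\<lambda>x. complex_of_real (1/n) * T f x) = (1/n) * l2norm (T f)"
      using l2norm_scale[OF bop_ell2[OF T f], of "complex_of_real (1/n)"] n cm by simp
    ultimately have "(1/n) * l2norm (T f) \<le> opnorm T" by simp
    then show ?thesis using n unfolding n_def[symmetric] by (simp add: field_simps)
  qed
qed

lemma opnorm_le:
  assumes T: "is_bounded_op T" and C: "0 \<le> C" and b: "\<And>f. f \<in> ell2 \<Longrightarrow> l2norm (T f) \<le> C * l2norm f"
  shows "opnorm T \<le> C"
  unfolding opnorm_def
proof (rule cSup_least)
  show "{l2norm (T f) |f. f \<in> ell2 \<and> l2norm f \<le> 1} \<noteq> {}"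
    by (intro ex_in_conv[THEN iffD1] exI[of _ "l2norm (T (\<lambda>_. 0))"] CollectI exI[of _ "\<lambda>_. 0"]) simp
  fix y assume "y \<in> {l2norm (T f) |f. f \<in> ell2 \<and> l2norm f \<le> 1}"
  then obtain f where f: "y = l2norm (T f)" "f \<in> ell2" "l2norm f \<le> 1" by blast
  have "y \<le> C * l2norm f" using b f by blast
  also have "\<dots> \<le> C * 1" using C f(3) by (intro mult_left_mono) auto
  finally show "y \<le> C" by simp
qed

lemma bop_plus:
  assumes A: "is_bounded_op A" and B: "is_bounded_op B"
  shows "is_bounded_op (op_plus A B)" "opnorm (op_plus A B) \<le> opnorm A + opnorm B"
proof -
  have bnd: "l2norm (op_plus A B f) \<le> (opnorm A + opnorm B) * l2norm f" if f: "f \<in> ell2" for f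
  proof -
    have "l2norm (op_plus A B f) \<le> l2norm (A f) + l2norm (B f)"
      unfolding op_plus_def by (rule l2norm_add(2)[OF bop_ell2[OF A f] bop_ell2[OF B f]])
    also have "\<dots> \<le> opnorm A * l2norm f + opnorm B * l2norm f"
      using opnorm_facts(2)[OF A f] opnorm_facts(2)[OF B f] by linarith
    finally show ?thesis by (simp add: distrib_right)
  qed
  show b: "is_bounded_op (op_plus A B)"
    unfolding is_bounded_op_def
  proof (intro conjI allI ballI impI)
    fix f :: "'a vec" assume "f \<notin> ell2" then show "op_plus A B f = (\<lambda>_. 0)"
      unfolding op_plus_def using bop_out[OF A] bop_out[OF B] by simp
  next
    fix f :: "'a vec" assume f: "f \<in> ell2" show "op_plus A B f \<in> ell2"
      unfolding op_plus_def by (rule l2norm_add(1)[OF bop_ell2[OF A f] bop_ell2[OF B f]])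
  next
    fix f g :: "'a vec" and a b assume f: "f \<in> ell2" and g: "g \<in> ell2"
    show "op_plus A B (\<lambda>x. a * f x + b * g x) = (\<lambda>x. a * op_plus A B f x + b * op_plus A B g x)"
      unfolding op_plus_def bop_lin[OF A f g] bop_lin[OF B f g] by (rule ext) (simp add: algebra_simps)
  next
    show "\<exists>K. \<forall>f\<in>ell2. l2norm (op_plus A B f) \<le> K * l2norm f" using bnd by blast
  qed
  show "opnorm (op_plus A B) \<le> opnorm A + opnorm B"
    by (rule opnorm_le[OF b]) (use opnorm_facts(1)[OF A] opnorm_facts(1)[OF B] bnd in auto)
qed

lemma bop_scale_op:
  assumes A: "is_bounded_op A"
  shows "is_bounded_op (op_scale c A)" "opnorm (op_scale c A) \<le> cmod c * opnorm A"
proof -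
  have bnd: "l2norm (op_scale c A f) \<le> (cmod c * opnorm A) * l2norm f" if f: "f \<in> ell2" for f
  proof -
    have "l2norm (op_scale c A f) = cmod c * l2norm (A f)"
      unfolding op_scale_def by (rule l2norm_scale(2)[OF bop_ell2[OF A f]])
    also have "\<dots> \<le> cmod c * (opnorm A * l2norm f)"
      using opnorm_facts(2)[OF A f] by (intro mult_left_mono) auto
    finally show ?thesis by (simp add: mult.assoc)
  qed
  show b: "is_bounded_op (op_scale c A)"
    unfolding is_bounded_op_def
  proof (intro conjI allI ballI impI)
    fix f :: "'a vec" assume "f \<notin> ell2" then show "op_scale c A f = (\<lambda>_. 0)"
      unfolding op_scale_def using bop_out[OF A] by simp
  next
    fix f :: "'a vec" assume f: "f \<in> ell2" show "op_scale c A f \<in> ell2"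
      unfolding op_scale_def by (rule l2norm_scale(1)[OF bop_ell2[OF A f]])
  next
    fix f g :: "'a vec" and a b assume f: "f \<in> ell2" and g: "g \<in> ell2"
    show "op_scale c A (\<lambda>x. a * f x + b * g x) = (\<lambda>x. a * op_scale c A f x + b * op_scale c A g x)"
      unfolding op_scale_def bop_lin[OF A f g] by (rule ext) (simp add: algebra_simps)
  next
    show "\<exists>K. \<forall>f\<in>ell2. l2norm (op_scale c A f) \<le> K * l2norm f" using bnd by blast
  qed
  show "opnorm (op_scale c A) \<le> cmod c * opnorm A"
    by (rule opnorm_le[OF b]) (use opnorm_facts(1)[OF A] bnd in auto)
qed

lemma op_minus_alt: "op_minus A B = op_plus A (op_scale (-1) B)"
  unfolding op_minus_def op_plus_def op_scale_def by (intro ext) simp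

lemma bop_minus:
  assumes A: "is_bounded_op A" and B: "is_bounded_op B"
  shows "is_bounded_op (op_minus A B)" "opnorm (op_minus A B) \<le> opnorm A + opnorm B"
proof -
  note s = bop_scale_op[OF B, of "-1"]
  show "is_bounded_op (op_minus A B)" unfolding op_minus_alt by (rule bop_plus(1)[OF A s(1)])
  have "opnorm (op_minus A B) \<le> opnorm A + opnorm (op_scale (-1) B)"
    unfolding op_minus_alt by (rule bop_plus(2)[OF A s(1)])
  then show "opnorm (op_minus A B) \<le> opnorm A + opnorm B" using s(2) by simp
qed

lemma bop_comp:
  assumes A: "is_bounded_op A" and B: "is_bounded_op B"
  shows "is_bounded_op (A \<circ> B)" "opnorm (A \<circ> B) \<le> opnorm A * opnorm B"
proof -
  have bnd: "l2norm ((A \<circ> B) f) \<le> (opnorm A * opnorm B) * l2norm f" if f: "f \<in> ell2" for f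
  proof -
    have "l2norm ((A \<circ> B) f) \<le> opnorm A * l2norm (B f)"
      using opnorm_facts(2)[OF A bop_ell2[OF B f]] by simp
    also have "\<dots> \<le> opnorm A * (opnorm B * l2norm f)"
      using opnorm_facts(2)[OF B f] opnorm_facts(1)[OF A] by (intro mult_left_mono) auto
    finally show ?thesis by (simp add: mult.assoc)
  qed
  show b: "is_bounded_op (A \<circ> B)"
    unfolding is_bounded_op_def
  proof (intro conjI allI ballI impI)
    fix f :: "'a vec" assume "f \<notin> ell2" then show "(A \<circ> B) f = (\<lambda>_. 0)"
      using bop_out[OF B] bop_zero[OF A] by simp
  next
    fix f :: "'a vec" assume f: "f \<in> ell2" then show "(A \<circ> B) f \<in> ell2"
      using bop_ell2[OF A bop_ell2[OF B f]] by simp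
  next
    fix f g :: "'a vec" and a b assume f: "f \<in> ell2" and g: "g \<in> ell2"
    show "(A \<circ> B) (\<lambda>x. a * f x + b * g x) = (\<lambda>x. a * (A \<circ> B) f x + b * (A \<circ> B) g x)"
      using bop_lin[OF B f g] bop_lin[OF A bop_ell2[OF B f] bop_ell2[OF B g]] by simp
  next
    show "\<exists>K. \<forall>f\<in>ell2. l2norm ((A \<circ> B) f) \<le> K * l2norm f" using bnd by blast
  qed
  show "opnorm (A \<circ> B) \<le> opnorm A * opnorm B"
    by (rule opnorm_le[OF b]) (use opnorm_facts(1)[OF A] opnorm_facts(1)[OF B] bnd in auto)
qed

lemma bop_zop: "is_bounded_op (zop::'a op)" "opnorm (zop::'a op) = 0"
proof -
  show b: "is_bounded_op zop" unfolding is_bounded_op_def zop_def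
    by (intro conjI allI ballI impI exI[of _ 0]) auto
  have "opnorm (zop::'a op) \<le> 0" by (rule opnorm_le[OF b]) (auto simp: zop_def)
  then show "opnorm (zop::'a op) = 0" using opnorm_facts(1)[OF b] by (rule order.antisym)
qed

lemma op_minus_self: "op_minus A A = zop"
  unfolding op_minus_def zop_def by simp




definition dl :: "'x \<Rightarrow> 'x vec" where "dl x = (\<lambda>y. if y = x then 1 else 0)"

lemma dl_ell2: "dl x \<in> ell2" "l2norm (dl x) = 1"
proof -
  have e: "dl x = (\<lambda>y. if y \<in> {x} then (\<lambda>_. 1::complex) y else 0)" unfolding dl_def by auto
  show "dl x \<in> ell2" unfolding e by (rule l2norm_finite_supp(1)) simp
  show "l2norm (dl x) = 1" unfolding e l2norm_finite_supp(2)[OF finite.insertI[OF finite.emptyI]]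
    by (simp add: L2_set_def)
qed

lemma lincomb_ell2: "f \<in> ell2 \<Longrightarrow> g \<in> ell2 \<Longrightarrow> (\<lambda>x. a * f x + b * g x) \<in> ell2"
  by (rule l2norm_add(1)[OF l2norm_scale(1) l2norm_scale(1)])

lemma fs_ell2: "finite F \<Longrightarrow> (\<lambda>y. if y \<in> F then c y else 0) \<in> ell2"
  by (rule l2norm_finite_supp(1))

lemma fs_inner:
  assumes T: "is_bounded_op T" and g: "g \<in> ell2" and F: "finite F"
  shows "l2inner (T (\<lambda>y. if y \<in> F then c y else 0)) g = (\<Sum>x\<in>F. cnj (c x) * l2inner (T (dl x)) g)"
  using F
proof (induction F rule: finite_induct)
  case empty
  then show ?case using bop_zero[OF T] by (simp add: l2inner_def)
next
  case (insert a F)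
  have e: "(\<lambda>y. if y \<in> insert a F then c y else 0) = (\<lambda>y. 1 * (if y \<in> F then c y else 0) + c a * dl a y)"
    using insert(2) by (auto simp: dl_def)
  have u: "(\<lambda>y. if y \<in> F then c y else 0) \<in> ell2" by (rule fs_ell2[OF insert(1)])
  have "T (\<lambda>y. if y \<in> insert a F then c y else 0) = (\<lambda>y. 1 * T (\<lambda>y. if y \<in> F then c y else 0) y + c a * T (dl a) y)"
    unfolding e by (rule bop_lin[OF T u dl_ell2(1)])
  then have "l2inner (T (\<lambda>y. if y \<in> insert a F then c y else 0)) g
      = cnj 1 * l2inner (T (\<lambda>y. if y \<in> F then c y else 0)) g + cnj (c a) * l2inner (T (dl a)) g"
    using l2inner_lin1[OF bop_ell2[OF T u] bop_ell2[OF T dl_ell2(1)] g, of 1 "c a"] by simp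
  then show ?case using insert by (simp add: add.commute)
qed

definition adjx :: "'x op \<Rightarrow> 'x op" where
  "adjx T g = (if g \<in> ell2 then (\<lambda>x. l2inner (T (dl x)) g) else (\<lambda>_. 0))"

lemma adjx_bound:
  assumes T: "is_bounded_op T" and g: "g \<in> ell2"
  shows "adjx T g \<in> ell2" "l2norm (adjx T g) \<le> opnorm T * l2norm g"
proof -
  define c where "c = adjx T g"
  have c: "c x = l2inner (T (dl x)) g" for x unfolding c_def adjx_def using g by simp
  have bnd: "L2_set (\<lambda>x. cmod (c x)) F \<le> opnorm T * l2norm g" if F: "finite F" for F
  proof -
    define u where "u = (\<lambda>y. if y \<in> F then c y else 0)"
    define L where "L = L2_set (\<lambda>x. cmod (c x)) F"
    have u: "u \<in> ell2" "l2norm u = L" unfolding u_def L_def using l2norm_finite_supp[OF F] by auto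
    have "l2inner (T u) g = (\<Sum>x\<in>F. cnj (c x) * c x)" unfolding u_def fs_inner[OF T g F] c ..
    also have "\<dots> = complex_of_real (\<Sum>x\<in>F. (cmod (c x))^2)"
      unfolding of_real_sum by (rule sum.cong[OF refl]) (simp only: complex_norm_square mult.commute)
    finally have i: "l2inner (T u) g = complex_of_real (\<Sum>x\<in>F. (cmod (c x))^2)" .
    have L2: "L^2 = (\<Sum>x\<in>F. (cmod (c x))^2)" unfolding L_def L2_set_def
      by (simp add: sum_nonneg)
    have "L^2 = cmod (l2inner (T u) g)" unfolding i L2 norm_of_real
      by (rule abs_of_nonneg[symmetric]) (simp add: sum_nonneg)
    also have "\<dots> \<le> l2norm (T u) * l2norm g" by (rule cauchy_schwarz[OF bop_ell2[OF T u(1)] g])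
    also have "\<dots> \<le> (opnorm T * L) * l2norm g"
      using opnorm_facts(2)[OF T u(1)] u(2) by (intro mult_right_mono) auto
    finally have *: "L * L \<le> L * (opnorm T * l2norm g)" by (simp add: power2_eq_square algebra_simps)
    have "L \<ge> 0" unfolding L_def by simp
    then show ?thesis
    proof (cases "L = 0")
      case True then show ?thesis using opnorm_facts(1)[OF T] unfolding L_def by simp
    next
      case False then have "L > 0" using \<open>L \<ge> 0\<close> by simp
      then show ?thesis using * unfolding L_def[symmetric] by (simp add: mult_le_cancel_left_pos)
    qed
  qed
  show "adjx T g \<in> ell2" "l2norm (adjx T g) \<le> opnorm T * l2norm g"
    using l2norm_leI[of c "opnorm T * l2norm g"] bnd unfolding c_def by auto
qed

lemma small_zero:
  fixes D :: complex
  assumes M: "0 \<le> M" and h: "\<And>e. 0 < e \<Longrightarrow> cmod D \<le> e * M"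
  shows "D = 0"
proof -
  have "cmod D \<le> 0 + e" if e: "0 < e" for e
  proof -
    have "cmod D \<le> (e / (M + 1)) * M" using h[of "e/(M+1)"] e M by simp
    also have "\<dots> \<le> e" using e M by (simp add: field_simps)
    finally show ?thesis by simp
  qed
  then have "cmod D \<le> 0" by (rule field_le_epsilon)
  then show ?thesis by simp
qed

lemma adjx_rel:
  assumes T: "is_bounded_op T" and f: "f \<in> ell2" and g: "g \<in> ell2"
  shows "l2inner (T f) g = l2inner f (adjx T g)"
proof -
  define c where "c = adjx T g"
  have cx: "c x = l2inner (T (dl x)) g" for x unfolding c_def adjx_def using g by simp
  have c: "c \<in> ell2" unfolding c_def by (rule adjx_bound(1)[OF T g])
  define M where "M = opnorm T * l2norm g + l2norm c"
  have M: "0 \<le> M" unfolding M_def using opnorm_facts(1)[OF T] by simp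
  have "cmod (l2inner (T f) g - l2inner f c) \<le> e * M" if e: "0 < e" for e
  proof -
    obtain F0 where F0: "finite F0" "\<And>F. finite F \<Longrightarrow> F0 \<subseteq> F \<Longrightarrow> l2norm (\<lambda>x. if x \<in> F then 0 else f x) < e"
      using tail_small[OF f e] by blast
    define fF where "fF = (\<lambda>y. if y \<in> F0 then f y else 0)"
    define tl where "tl = (\<lambda>x. if x \<in> F0 then 0 else f x)"
    have fF: "fF \<in> ell2" unfolding fF_def by (rule fs_ell2[OF F0(1)])
    have tl: "tl = (\<lambda>x. f x - fF x)" unfolding tl_def fF_def by auto
    have tle: "tl \<in> ell2" unfolding tl by (rule l2norm_minus(1)[OF f fF])
    have tsm: "l2norm tl < e" unfolding tl_def using F0 by blast
    have i1: "l2inner (T fF) g = l2inner fF c"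
    proof -
      have "l2inner (T fF) g = (\<Sum>x\<in>F0. cnj (f x) * c x)" unfolding fF_def fs_inner[OF T g F0(1)] cx ..
      also have "\<dots> = l2inner fF c" unfolding l2inner_def fF_def
        using F0(1) by (subst infsum_cong_neutral[where T=F0 and g="\<lambda>x. cnj (f x) * c x"]) auto
      finally show ?thesis .
    qed
    have "l2inner (T f) g - l2inner f c = l2inner (T tl) g - l2inner tl c"
    proof -
      have "T tl = (\<lambda>x. T f x - T fF x)" unfolding tl by (rule bop_diff[OF T f fF])
      then have "l2inner (T tl) g = l2inner (T f) g - l2inner (T fF) g"
        using l2inner_diff1[OF bop_ell2[OF T f] bop_ell2[OF T fF] g] by simp
      moreover have "l2inner tl c = l2inner f c - l2inner fF c" unfolding tl by (rule l2inner_diff1[OF f fF c])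
      ultimately show ?thesis using i1 by simp
    qed
    also have "cmod \<dots> \<le> cmod (l2inner (T tl) g) + cmod (l2inner tl c)" by (rule norm_triangle_ineq4)
    also have "\<dots> \<le> l2norm (T tl) * l2norm g + l2norm tl * l2norm c"
      by (intro add_mono cauchy_schwarz bop_ell2[OF T] tle g c)
    also have "\<dots> \<le> (opnorm T * l2norm tl) * l2norm g + l2norm tl * l2norm c"
      by (intro add_mono mult_right_mono opnorm_facts(2)[OF T tle]) auto
    also have "\<dots> = l2norm tl * M" unfolding M_def by (simp add: algebra_simps)
    also have "\<dots> \<le> e * M" using tsm M by (intro mult_right_mono) auto
    finally show ?thesis .
  qed
  then have "l2inner (T f) g - l2inner f c = 0" by (rule small_zero[OF M])
  then show ?thesis unfolding c_def by simp
qed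

lemma adjx_bop:
  assumes T: "is_bounded_op T"
  shows "is_bounded_op (adjx T)" "opnorm (adjx T) \<le> opnorm T"
proof -
  show b: "is_bounded_op (adjx T)"
    unfolding is_bounded_op_def
  proof (intro conjI allI ballI impI)
    fix f :: "'a vec" assume "f \<notin> ell2" then show "adjx T f = (\<lambda>_. 0)" by (simp add: adjx_def)
  next
    fix f :: "'a vec" assume f: "f \<in> ell2" show "adjx T f \<in> ell2" by (rule adjx_bound(1)[OF T f])
  next
    fix f g :: "'a vec" and a b assume f: "f \<in> ell2" and g: "g \<in> ell2"
    show "adjx T (\<lambda>x. a * f x + b * g x) = (\<lambda>x. a * adjx T f x + b * adjx T g x)"
      unfolding adjx_def using lincomb_ell2[OF f g, of a b] f g
      by (simp add: l2inner_lin2[OF bop_ell2[OF T dl_ell2(1)] f g])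
  next
    show "\<exists>K. \<forall>f\<in>ell2. l2norm (adjx T f) \<le> K * l2norm f" using adjx_bound(2)[OF T] by blast
  qed
  show "opnorm (adjx T) \<le> opnorm T"
    by (rule opnorm_le[OF b opnorm_facts(1)[OF T]]) (rule adjx_bound(2)[OF T])
qed

lemma adjx_unique:
  assumes T: "is_bounded_op T" and T1: "is_bounded_op T1"
    and r: "\<forall>f\<in>ell2. \<forall>g\<in>ell2. l2inner (T f) g = l2inner f (T1 g)"
  shows "T1 = adjx T"
proof (rule ext)
  fix g :: "'a vec"
  show "T1 g = adjx T g"
  proof (cases "g \<in> ell2")
    case False then show ?thesis using bop_out[OF T1] by (simp add: adjx_def)
  next
    case g: True
    show ?thesis
    proof (rule ext)
      fix x
      have "T1 g x = l2inner (dl x) (T1 g)" unfolding dl_def l2inner_delta by simp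
      also have "\<dots> = l2inner (T (dl x)) g" using r dl_ell2(1) g by metis
      finally show "T1 g x = adjx T g x" using g by (simp add: adjx_def)
    qed
  qed
qed

lemma adj_eq:
  assumes T: "is_bounded_op T"
  shows "adj T = adjx T"
proof -
  let ?P = "\<lambda>T'. is_bounded_op T' \<and> (\<forall>f\<in>ell2. \<forall>g\<in>ell2. l2inner (T f) g = l2inner f (T' g))"
  have "?P (adjx T)" using adjx_bop(1)[OF T] adjx_rel[OF T] by blast
  then have "?P (adj T)" unfolding adj_def by (rule someI[where P="?P"])
  then show ?thesis using adjx_unique[OF T] by blast
qed

lemma adjx_minus:
  assumes T: "is_bounded_op T" and B: "is_bounded_op B"
  shows "adjx (op_minus T B) = op_minus (adjx T) (adjx B)"
proof (intro ext)
  fix g :: "'a vec" and x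
  show "adjx (op_minus T B) g x = op_minus (adjx T) (adjx B) g x"
  proof (cases "g \<in> ell2")
    case False then show ?thesis by (simp add: adjx_def op_minus_def)
  next
    case True
    have "op_minus T B (dl x) = (\<lambda>y. T (dl x) y - B (dl x) y)" unfolding op_minus_def ..
    then show ?thesis using True l2inner_diff1[OF bop_ell2[OF T dl_ell2(1)] bop_ell2[OF B dl_ell2(1)] True]
      by (simp add: adjx_def op_minus_def)
  qed
qed

lemma adjx_plus:
  assumes T: "is_bounded_op T" and B: "is_bounded_op B"
  shows "adjx (op_plus T B) = op_plus (adjx T) (adjx B)"
proof (intro ext)
  fix g :: "'a vec" and x
  show "adjx (op_plus T B) g x = op_plus (adjx T) (adjx B) g x"
  proof (cases "g \<in> ell2")
    case False then show ?thesis by (simp add: adjx_def op_plus_def)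
  next
    case True
    have "op_plus T B (dl x) = (\<lambda>y. 1 * T (dl x) y + 1 * B (dl x) y)" unfolding op_plus_def by simp
    then show ?thesis using True l2inner_lin1[OF bop_ell2[OF T dl_ell2(1)] bop_ell2[OF B dl_ell2(1)] True, where a=1 and b=1]
      by (simp add: adjx_def op_plus_def)
  qed
qed




definition ainv :: "('s \<Rightarrow> ('x \<rightharpoonup> 'x)) \<Rightarrow> 's \<Rightarrow> 'x \<Rightarrow> 'x" where
  "ainv \<alpha> s y = (THE x. \<alpha> s x = Some y)"

lemma ainv_eq:
  assumes inj: "inj_on (\<alpha> s) (dom (\<alpha> s))" and a: "\<alpha> s x = Some y"
  shows "ainv \<alpha> s y = x"
  unfolding ainv_def
proof (rule the_equality[where P="\<lambda>x. \<alpha> s x = Some y", OF a])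
  fix x' assume a': "\<alpha> s x' = Some y"
  have "x' \<in> dom (\<alpha> s)" "x \<in> dom (\<alpha> s)" using a a' by auto
  then show "x' = x" using inj a a' unfolding inj_on_def by metis
qed

lemma Vop_in: "f \<in> ell2 \<Longrightarrow> Vop \<alpha> s f = (\<lambda>y. if \<exists>x. \<alpha> s x = Some y then f (ainv \<alpha> s y) else 0)"
  unfolding Vop_def ainv_def by simp

lemma Vop_out: "f \<notin> ell2 \<Longrightarrow> Vop \<alpha> s f = (\<lambda>_. 0)"
  unfolding Vop_def by simp

lemma Vop_norm:
  assumes inj: "inj_on (\<alpha> s) (dom (\<alpha> s))" and f: "f \<in> ell2"
  shows "Vop \<alpha> s f \<in> ell2" "l2norm (Vop \<alpha> s f) \<le> l2norm f"
proof -
  define R where "R = {y. \<exists>x. \<alpha> s x = Some y}"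
  have V: "Vop \<alpha> s f y = (if y \<in> R then f (ainv \<alpha> s y) else 0)" for y
    unfolding Vop_in[OF f] R_def by simp
  have injR: "inj_on (ainv \<alpha> s) R"
  proof (rule inj_onI)
    fix y1 y2 assume "y1 \<in> R" "y2 \<in> R" and eq: "ainv \<alpha> s y1 = ainv \<alpha> s y2"
    then obtain x1 x2 where x: "\<alpha> s x1 = Some y1" "\<alpha> s x2 = Some y2" unfolding R_def by blast
    then have "x1 = x2" using eq ainv_eq[of \<alpha> s, OF inj] by metis
    then show "y1 = y2" using x by simp
  qed
  have "L2_set (\<lambda>y. cmod (Vop \<alpha> s f y)) F \<le> l2norm f" if F: "finite F" for F
  proof -
    have "(\<Sum>y\<in>F. (cmod (Vop \<alpha> s f y))^2) = (\<Sum>y\<in>F \<inter> R. (cmod (f (ainv \<alpha> s y)))^2)"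
      by (rule sum.mono_neutral_cong_right) (use F in \<open>auto simp: V\<close>)
    also have "\<dots> = (\<Sum>x\<in>ainv \<alpha> s ` (F \<inter> R). (cmod (f x))^2)"
      by (rule sum.reindex[symmetric, unfolded comp_def]) (rule inj_on_subset[OF injR], blast)
    finally have "L2_set (\<lambda>y. cmod (Vop \<alpha> s f y)) F = L2_set (\<lambda>x. cmod (f x)) (ainv \<alpha> s ` (F \<inter> R))"
      unfolding L2_set_def by simp
    also have "\<dots> \<le> l2norm f" by (rule L2_le_l2norm[OF f]) (use F in simp)
    finally show ?thesis .
  qed
  then show "Vop \<alpha> s f \<in> ell2" "l2norm (Vop \<alpha> s f) \<le> l2norm f"
    using l2norm_leI[of "Vop \<alpha> s f" "l2norm f"] by auto
qed

lemma Vop_bop: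
  assumes inj: "inj_on (\<alpha> s) (dom (\<alpha> s))"
  shows "is_bounded_op (Vop \<alpha> s)"
  unfolding is_bounded_op_def
proof (intro conjI allI ballI impI)
  fix f :: "'a vec" assume "f \<notin> ell2" then show "Vop \<alpha> s f = (\<lambda>_. 0)" by (rule Vop_out)
next
  fix f :: "'a vec" assume f: "f \<in> ell2" show "Vop \<alpha> s f \<in> ell2" by (rule Vop_norm(1)[of \<alpha> s, OF inj f])
next
  fix f g :: "'a vec" and a b assume f: "f \<in> ell2" and g: "g \<in> ell2"
  show "Vop \<alpha> s (\<lambda>x. a * f x + b * g x) = (\<lambda>x. a * Vop \<alpha> s f x + b * Vop \<alpha> s g x)"
    unfolding Vop_in[OF f] Vop_in[OF g] Vop_in[OF lincomb_ell2[OF f g]] by (rule ext) simp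
next
  show "\<exists>K. \<forall>f\<in>ell2. l2norm (Vop \<alpha> s f) \<le> K * l2norm f"
    by (intro exI[of _ 1]) (use Vop_norm(2)[of \<alpha> s, OF inj] in simp)
qed

lemma linfty_bound: "g \<in> linfty \<Longrightarrow> \<exists>K\<ge>0. \<forall>x. cmod (g x) \<le> K"
proof -
  assume "g \<in> linfty"
  then obtain K where K: "\<forall>x. cmod (g x) \<le> K" unfolding linfty_def by blast
  have "0 \<le> cmod (g undefined)" by simp
  then have "0 \<le> K" using K[rule_format, of undefined] by linarith
  then show ?thesis using K by blast
qed

lemma mult_op_in: "f \<in> ell2 \<Longrightarrow> mult_op g f = (\<lambda>x. g x * f x)"
  unfolding mult_op_def by simp

lemma mult_op_out: "f \<notin> ell2 \<Longrightarrow> mult_op g f = (\<lambda>_. 0)"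
  unfolding mult_op_def by simp

lemma mult_op_norm:
  assumes g: "\<And>x. cmod (g x) \<le> K" and f: "f \<in> ell2"
  shows "mult_op g f \<in> ell2" "l2norm (mult_op g f) \<le> K * l2norm f"
proof -
  have "0 \<le> cmod (g undefined)" by simp
  then have K: "0 \<le> K" using g[of undefined] by linarith
  have d: "cmod (g x * f x) \<le> cmod (complex_of_real K * f x)" for x
    using g[of x] K by (simp add: norm_mult mult_right_mono)
  note s = l2norm_scale[OF f, of "complex_of_real K"]
  show "mult_op g f \<in> ell2" unfolding mult_op_in[OF f] by (rule l2norm_dom(1)[OF s(1) d])
  have "l2norm (mult_op g f) \<le> l2norm (\<lambda>x. complex_of_real K * f x)"
    unfolding mult_op_in[OF f] by (rule l2norm_dom(2)[OF s(1) d])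
  then show "l2norm (mult_op g f) \<le> K * l2norm f" using s(2) K by simp
qed

lemma mult_op_bop:
  assumes g: "g \<in> linfty"
  shows "is_bounded_op (mult_op g)"
proof -
  obtain K where K: "K \<ge> 0" "\<And>x. cmod (g x) \<le> K" using linfty_bound[OF g] by blast
  show ?thesis unfolding is_bounded_op_def
  proof (intro conjI allI ballI impI)
    fix f :: "'a vec" assume "f \<notin> ell2" then show "mult_op g f = (\<lambda>_. 0)" by (rule mult_op_out)
  next
    fix f :: "'a vec" assume f: "f \<in> ell2" show "mult_op g f \<in> ell2" by (rule mult_op_norm(1)[of g K, OF K(2) f])
  next
    fix f h :: "'a vec" and a b assume f: "f \<in> ell2" and h: "h \<in> ell2"
    show "mult_op g (\<lambda>x. a * f x + b * h x) = (\<lambda>x. a * mult_op g f x + b * mult_op g h x)"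
      unfolding mult_op_in[OF f] mult_op_in[OF h] mult_op_in[OF lincomb_ell2[OF f h]]
      by (rule ext) (simp add: algebra_simps)
  next
    show "\<exists>K. \<forall>f\<in>ell2. l2norm (mult_op g f) \<le> K * l2norm f"
      using mult_op_norm(2)[of g K, OF K(2)] by blast
  qed
qed

lemma mult_op_opnorm:
  assumes "\<And>x. cmod (g x) \<le> K" "g \<in> linfty" "0 \<le> K"
  shows "opnorm (mult_op g) \<le> K"
  by (rule opnorm_le[OF mult_op_bop[OF assms(2)] assms(3)]) (rule mult_op_norm(2)[of g K, OF assms(1)])

lemma mult_linfty: "g \<in> linfty \<Longrightarrow> h \<in> linfty \<Longrightarrow> (\<lambda>x. g x * h x) \<in> linfty"
proof -
  assume g: "g \<in> linfty" and h: "h \<in> linfty"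
  obtain K where "\<forall>x. cmod (g x) \<le> K" "0 \<le> K" using linfty_bound[OF g] by blast
  moreover obtain L where "\<forall>x. cmod (h x) \<le> L" "0 \<le> L" using linfty_bound[OF h] by blast
  ultimately have "cmod (g x * h x) \<le> K * L" for x unfolding norm_mult by (intro mult_mono) auto
  then show ?thesis unfolding linfty_def by blast
qed

lemma mult_comp:
  assumes g: "g \<in> linfty" and h: "h \<in> linfty"
  shows "mult_op g \<circ> mult_op h = mult_op (\<lambda>x. g x * h x)"
proof (rule ext)
  fix f :: "'a vec"
  show "(mult_op g \<circ> mult_op h) f = mult_op (\<lambda>x. g x * h x) f"
  proof (cases "f \<in> ell2")
    case True
    have "mult_op h f \<in> ell2" using bop_ell2[OF mult_op_bop[OF h] True] .
    then show ?thesis using True by (simp add: mult_op_in mult.assoc)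
  next
    case False then show ?thesis by (simp add: mult_op_out mult_op_in)
  qed
qed




lemma comp_plus_right:
  assumes A: "is_bounded_op A" and B: "is_bounded_op B" and C: "is_bounded_op C"
  shows "A \<circ> op_plus B C = op_plus (A \<circ> B) (A \<circ> C)"
proof (rule ext)
  fix f :: "'a vec"
  show "(A \<circ> op_plus B C) f = op_plus (A \<circ> B) (A \<circ> C) f"
  proof (cases "f \<in> ell2")
    case True
    then show ?thesis unfolding op_plus_def comp_def
      using bop_add[OF A bop_ell2[OF B True] bop_ell2[OF C True]] by simp
  next
    case False
    then show ?thesis unfolding op_plus_def comp_def using bop_out[OF B] bop_out[OF C] bop_zero[OF A]
      by simp
  qed
qed

lemma comp_plus_left: "op_plus A B \<circ> C = op_plus (A \<circ> C) (B \<circ> C)"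
  unfolding op_plus_def comp_def ..

lemma scale_plus: "op_scale c (op_plus A B) = op_plus (op_scale c A) (op_scale c B)"
  unfolding op_plus_def op_scale_def by (intro ext) (simp add: distrib_left)

lemma scale_comp: "op_scale c (A \<circ> B) = op_scale c A \<circ> B"
  unfolding op_scale_def comp_def ..

lemma scale_mult: "op_scale c (mult_op g) = mult_op (\<lambda>x. c * g x)"
  unfolding op_scale_def mult_op_def by (intro ext) (simp add: mult.assoc)

lemma scale_linfty: "g \<in> linfty \<Longrightarrow> (\<lambda>x. c * g x) \<in> linfty"
proof -
  assume "g \<in> linfty"
  then obtain K where K: "\<forall>x. cmod (g x) \<le> K" "0 \<le> K" using linfty_bound by blast
  have "cmod (c * g x) \<le> cmod c * K" for x unfolding norm_mult using K by (intro mult_left_mono) auto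
  then show ?thesis unfolding linfty_def by blast
qed

locale irep =
  fixes mult :: "'s \<Rightarrow> 's \<Rightarrow> 's" and e :: 's and \<alpha> :: "'s \<Rightarrow> ('x \<rightharpoonup> 'x)"
  assumes pb: "\<forall>s. inj_on (\<alpha> s) (dom (\<alpha> s))"
    and hom: "\<forall>s t. \<alpha> (mult s t) = \<alpha> s \<circ>\<^sub>m \<alpha> t"
    and unital: "\<alpha> e = Some"
    and inv: "\<forall>s. \<exists>!t. mult (mult s t) s = s \<and> mult (mult t s) t = t"
begin

lemma inj: "inj_on (\<alpha> s) (dom (\<alpha> s))" using pb by blast

lemma ainv: "\<alpha> s x = Some y \<Longrightarrow> ainv \<alpha> s y = x"
  by (rule ainv_eq[of \<alpha> s, OF inj])

lemma V_bop: "is_bounded_op (Vop \<alpha> s)" by (rule Vop_bop[of \<alpha> s, OF inj])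

lemma inj_eq: "\<alpha> s x = Some y \<Longrightarrow> \<alpha> s x' = Some y \<Longrightarrow> x' = x"
  using ainv by metis

definition tr :: "'s \<Rightarrow> 'x vec \<Rightarrow> 'x vec" where
  "tr s h y = (if \<exists>x. \<alpha> s x = Some y then h (ainv \<alpha> s y) else 0)"

lemma tr_linfty: "h \<in> linfty \<Longrightarrow> tr s h \<in> linfty"
proof -
  assume "h \<in> linfty"
  then obtain K where K: "\<forall>x. cmod (h x) \<le> K" "0 \<le> K" using linfty_bound by blast
  have "cmod (tr s h y) \<le> K" for y using K unfolding tr_def by auto
  then show ?thesis unfolding linfty_def by blast
qed

lemma Vop_mult:
  assumes h: "h \<in> linfty"
  shows "Vop \<alpha> s \<circ> mult_op h = mult_op (tr s h) \<circ> Vop \<alpha> s"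
proof (rule ext)
  fix f :: "'x vec"
  show "(Vop \<alpha> s \<circ> mult_op h) f = (mult_op (tr s h) \<circ> Vop \<alpha> s) f"
  proof (cases "f \<in> ell2")
    case True
    have hf: "mult_op h f \<in> ell2" by (rule bop_ell2[OF mult_op_bop[OF h] True])
    have vf: "Vop \<alpha> s f \<in> ell2" by (rule bop_ell2[OF V_bop True])
    show ?thesis unfolding comp_def Vop_in[OF hf] mult_op_in[OF vf] unfolding Vop_in[OF True] mult_op_in[OF True]
      by (rule ext) (simp add: tr_def)
  next
    case False
    show ?thesis unfolding comp_def mult_op_out[OF False] Vop_out[OF False]
      Vop_in[OF zero_ell2] mult_op_in[OF zero_ell2] by simp
  qed
qed

lemma Vop_comp: "Vop \<alpha> s \<circ> Vop \<alpha> t = Vop \<alpha> (mult s t)"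
proof (rule ext)
  fix f :: "'x vec"
  show "(Vop \<alpha> s \<circ> Vop \<alpha> t) f = Vop \<alpha> (mult s t) f"
  proof (cases "f \<in> ell2")
    case False
    show ?thesis unfolding comp_def Vop_out[OF False] Vop_in[OF zero_ell2] by simp
  next
    case True
    have vf: "Vop \<alpha> t f \<in> ell2" by (rule bop_ell2[OF V_bop True])
    have st: "\<alpha> (mult s t) w = Some y \<longleftrightarrow> (\<exists>z. \<alpha> t w = Some z \<and> \<alpha> s z = Some y)" for w y
      using hom by (simp add: map_comp_Some_iff)
    show ?thesis unfolding comp_def Vop_in[OF vf] unfolding Vop_in[OF True]
    proof (rule ext)
      fix y
      show "(if \<exists>x. \<alpha> s x = Some y then if \<exists>x. \<alpha> t x = Some (ainv \<alpha> s y) then f (ainv \<alpha> t (ainv \<alpha> s y)) else 0 else 0) =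
        (if \<exists>x. \<alpha> (mult s t) x = Some y then f (ainv \<alpha> (mult s t) y) else 0)"
      proof (cases "\<exists>x. \<alpha> s x = Some y")
        case False
        then have "\<not> (\<exists>x. \<alpha> (mult s t) x = Some y)" using st by blast
        then show ?thesis using False by simp
      next
        case True
        then obtain x where x: "\<alpha> s x = Some y" by blast
        have ax: "ainv \<alpha> s y = x" by (rule ainv[OF x])
        show ?thesis
        proof (cases "\<exists>w. \<alpha> t w = Some x")
          case True
          then obtain w where w: "\<alpha> t w = Some x" by blast
          have aw: "ainv \<alpha> t x = w" by (rule ainv[OF w])
          have sw: "\<alpha> (mult s t) w = Some y" using st w x by blast
          have "ainv \<alpha> (mult s t) y = w" by (rule ainv[OF sw])
          then show ?thesis using x ax aw w sw by auto
        next
          case False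
          have "\<not> (\<exists>w. \<alpha> (mult s t) w = Some y)"
          proof
            assume "\<exists>w. \<alpha> (mult s t) w = Some y"
            then obtain w z where "\<alpha> t w = Some z" "\<alpha> s z = Some y" using st by blast
            then show False using False inj_eq[OF x] by metis
          qed
          then show ?thesis using x ax False by auto
        qed
      qed
    qed
  qed
qed

lemma Ve: "f \<in> ell2 \<Longrightarrow> Vop \<alpha> e f = f"
proof -
  assume f: "f \<in> ell2"
  have "ainv \<alpha> e y = y" for y using ainv[of e y y] unital by simp
  then show ?thesis unfolding Vop_in[OF f] using unital by auto
qed

lemma mult_Ve: "mult_op g \<circ> Vop \<alpha> e = mult_op g"
proof (rule ext)
  fix f :: "'x vec"
  show "(mult_op g \<circ> Vop \<alpha> e) f = mult_op g f"
    by (cases "f \<in> ell2") (simp_all add: Ve mult_op_out Vop_out mult_op_in[OF zero_ell2])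
qed

lemma one_linfty: "(\<lambda>_. 1) \<in> linfty" unfolding linfty_def by (intro CollectI exI[of _ 1]) simp

lemma one_V: "mult_op (\<lambda>_. 1) \<circ> Vop \<alpha> s = Vop \<alpha> s"
proof (rule ext)
  fix f :: "'x vec"
  have "Vop \<alpha> s f \<in> ell2"
    by (cases "f \<in> ell2") (simp_all add: bop_ell2[OF V_bop] Vop_out)
  then show "(mult_op (\<lambda>_. 1) \<circ> Vop \<alpha> s) f = Vop \<alpha> s f" by (simp add: mult_op_in)
qed

lemma inverse_rel: "\<exists>t. \<forall>x y. \<alpha> t y = Some x \<longleftrightarrow> \<alpha> s x = Some y"
proof -
  obtain t where t: "mult (mult s t) s = s" "mult (mult t s) t = t" using inv by blast
  have e1: "\<alpha> s = (\<alpha> s \<circ>\<^sub>m \<alpha> t) \<circ>\<^sub>m \<alpha> s" using hom t(1) by metis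
  have e2: "\<alpha> t = (\<alpha> t \<circ>\<^sub>m \<alpha> s) \<circ>\<^sub>m \<alpha> t" using hom t(2) by metis
  have "\<alpha> t y = Some x \<longleftrightarrow> \<alpha> s x = Some y" for x y
  proof
    assume a: "\<alpha> t y = Some x"
    have "((\<alpha> t \<circ>\<^sub>m \<alpha> s) \<circ>\<^sub>m \<alpha> t) y = Some x" using e2 a by simp
    then obtain z where z: "\<alpha> s x = Some z" "\<alpha> t z = Some x" using a by (auto simp: map_comp_Some_iff)
    have "z = y" using inj_eq[of t z x y] z(2) a by simp
    then show "\<alpha> s x = Some y" using z by simp
  next
    assume a: "\<alpha> s x = Some y"
    have "((\<alpha> s \<circ>\<^sub>m \<alpha> t) \<circ>\<^sub>m \<alpha> s) x = Some y" using e1 a by simp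
    then obtain z where z: "\<alpha> t y = Some z" "\<alpha> s z = Some y" using a by (auto simp: map_comp_Some_iff)
    have "z = x" using inj_eq[of s x y z] z(2) a by simp
    then show "\<alpha> t y = Some x" using z by simp
  qed
  then show ?thesis by blast
qed

lemma gen_delta:
  "(mult_op g \<circ> Vop \<alpha> s) (dl x) =
     (case \<alpha> s x of None \<Rightarrow> (\<lambda>_. 0) | Some y0 \<Rightarrow> (\<lambda>y. if y = y0 then g y0 else 0))"
proof -
  have v: "Vop \<alpha> s (dl x) \<in> ell2" by (rule bop_ell2[OF V_bop dl_ell2(1)])
  show ?thesis
  proof (cases "\<alpha> s x")
    case None
    have "Vop \<alpha> s (dl x) y = 0" for y
    proof -
      have "\<not> (\<exists>x'. \<alpha> s x' = Some y \<and> ainv \<alpha> s y = x)"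
      proof
        assume "\<exists>x'. \<alpha> s x' = Some y \<and> ainv \<alpha> s y = x"
        then obtain x' where "\<alpha> s x' = Some y" "ainv \<alpha> s y = x" by blast
        then have "x' = x" using ainv by metis
        then show False using None \<open>\<alpha> s x' = Some y\<close> by simp
      qed
      then show ?thesis unfolding Vop_in[OF dl_ell2(1)] unfolding dl_def by auto
    qed
    then show ?thesis using None v by (simp add: mult_op_in)
  next
    case (Some y0)
    have "Vop \<alpha> s (dl x) y = (if y = y0 then 1 else 0)" for y
    proof (cases "y = y0")
      case True then show ?thesis unfolding Vop_in[OF dl_ell2(1)] unfolding dl_def using Some ainv[OF Some] by auto
    next
      case False
      have "\<not> (\<exists>x'. \<alpha> s x' = Some y \<and> ainv \<alpha> s y = x)"
      proof
        assume "\<exists>x'. \<alpha> s x' = Some y \<and> ainv \<alpha> s y = x"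
        then obtain x' where "\<alpha> s x' = Some y" "ainv \<alpha> s y = x" by blast
        then have "x' = x" using ainv by metis
        then show False using Some \<open>\<alpha> s x' = Some y\<close> False by simp
      qed
      then show ?thesis unfolding Vop_in[OF dl_ell2(1)] unfolding dl_def using False by auto
    qed
    then show ?thesis using Some v by (auto simp: mult_op_in)
  qed
qed

definition kf :: "'x vec \<Rightarrow> 's \<Rightarrow> 'x vec" where
  "kf g s x = (case \<alpha> s x of None \<Rightarrow> 0 | Some y \<Rightarrow> cnj (g y))"

lemma kf_linfty: "g \<in> linfty \<Longrightarrow> kf g s \<in> linfty"
proof -
  assume "g \<in> linfty"
  then obtain K where K: "\<forall>x. cmod (g x) \<le> K" "0 \<le> K" using linfty_bound by blast
  have "cmod (kf g s x) \<le> K" for x using K unfolding kf_def by (cases "\<alpha> s x") auto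
  then show ?thesis unfolding linfty_def by blast
qed

lemma adj_gen:
  assumes g: "g \<in> linfty"
  shows "\<exists>t. adjx (mult_op g \<circ> Vop \<alpha> s) = mult_op (kf g s) \<circ> Vop \<alpha> t"
proof -
  obtain t where t: "\<And>x y. \<alpha> t y = Some x \<longleftrightarrow> \<alpha> s x = Some y" using inverse_rel by blast
  have "adjx (mult_op g \<circ> Vop \<alpha> s) = mult_op (kf g s) \<circ> Vop \<alpha> t"
  proof (intro ext)
    fix h :: "'x vec" and x
    show "adjx (mult_op g \<circ> Vop \<alpha> s) h x = (mult_op (kf g s) \<circ> Vop \<alpha> t) h x"
    proof (cases "h \<in> ell2")
      case False
      then show ?thesis unfolding adjx_def comp_def Vop_out[OF False] mult_op_in[OF zero_ell2] by simp
    next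
      case True
      have vh: "Vop \<alpha> t h \<in> ell2" by (rule bop_ell2[OF V_bop True])
      have r: "(mult_op (kf g s) \<circ> Vop \<alpha> t) h x = kf g s x * Vop \<alpha> t h x"
        unfolding comp_def mult_op_in[OF vh] ..
      show ?thesis
      proof (cases "\<alpha> s x")
        case None
        then have "kf g s x = 0" unfolding kf_def by simp
        moreover have "adjx (mult_op g \<circ> Vop \<alpha> s) h x = 0"
          unfolding adjx_def using True None gen_delta[of g s x] by (simp add: l2inner_def)
        ultimately show ?thesis using r by simp
      next
        case (Some y0)
        have ty: "\<alpha> t y0 = Some x" using t Some by blast
        have "Vop \<alpha> t h x = h y0" unfolding Vop_in[OF True] using ty ainv[OF ty] by auto
        moreover have "kf g s x = cnj (g y0)" unfolding kf_def using Some by simp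
        moreover have "adjx (mult_op g \<circ> Vop \<alpha> s) h x = cnj (g y0) * h y0"
          unfolding adjx_def using True Some gen_delta[of g s x] by (simp add: l2inner_delta)
        ultimately show ?thesis using r by simp
      qed
    qed
  qed
  then show ?thesis by blast
qed

end




lemma comp_minus_right:
  assumes A: "is_bounded_op A" and B: "is_bounded_op B" and C: "is_bounded_op C"
  shows "A \<circ> op_minus B C = op_minus (A \<circ> B) (A \<circ> C)"
proof (rule ext)
  fix f :: "'a vec"
  show "(A \<circ> op_minus B C) f = op_minus (A \<circ> B) (A \<circ> C) f"
  proof (cases "f \<in> ell2")
    case True
    then show ?thesis unfolding op_minus_def comp_def
      using bop_diff[OF A bop_ell2[OF B True] bop_ell2[OF C True]] by simp
  next
    case False
    then show ?thesis unfolding op_minus_def comp_def using bop_out[OF B] bop_out[OF C] bop_zero[OF A]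
      by simp
  qed
qed

lemma subalg_plus: "is_cstar_subalg A \<Longrightarrow> S \<in> A \<Longrightarrow> T \<in> A \<Longrightarrow> op_plus S T \<in> A"
  unfolding is_cstar_subalg_def by (elim conjE) blast
lemma subalg_comp: "is_cstar_subalg A \<Longrightarrow> S \<in> A \<Longrightarrow> T \<in> A \<Longrightarrow> S \<circ> T \<in> A"
  unfolding is_cstar_subalg_def by (elim conjE) blast
lemma subalg_scale: "is_cstar_subalg A \<Longrightarrow> S \<in> A \<Longrightarrow> op_scale c S \<in> A"
  unfolding is_cstar_subalg_def by (elim conjE) blast

lemma cstar_gen_closed:
  assumes S: "S \<in> cstar_gen G" and T: "T \<in> cstar_gen G"
  shows "op_plus S T \<in> cstar_gen G" "S \<circ> T \<in> cstar_gen G" "op_scale c S \<in> cstar_gen G"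
    "op_minus S T \<in> cstar_gen G"
proof -
  have m: "S \<in> A" "T \<in> A" if "is_cstar_subalg A" "G \<subseteq> A" for A
    using S T that unfolding cstar_gen_def by blast+
  show "op_plus S T \<in> cstar_gen G" unfolding cstar_gen_def
    by (rule InterI) (use m subalg_plus in blast)
  show "S \<circ> T \<in> cstar_gen G" unfolding cstar_gen_def
    by (rule InterI) (use m subalg_comp in blast)
  show "op_scale c S \<in> cstar_gen G" unfolding cstar_gen_def
    by (rule InterI) (use m subalg_scale in blast)
  show "op_minus S T \<in> cstar_gen G" unfolding cstar_gen_def op_minus_alt
    by (rule InterI) (use m subalg_scale subalg_plus in blast)
qed

lemma cstar_gen_gen: "x \<in> G \<Longrightarrow> x \<in> cstar_gen G"
  unfolding cstar_gen_def by blast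

lemma cstar_gen_least: "is_cstar_subalg A \<Longrightarrow> G \<subseteq> A \<Longrightarrow> cstar_gen G \<subseteq> A"
  unfolding cstar_gen_def by blast

context irep begin

definition gop :: "'x vec \<Rightarrow> 's \<Rightarrow> 'x op" where "gop g s = mult_op g \<circ> Vop \<alpha> s"

lemma gop_bop: "g \<in> linfty \<Longrightarrow> is_bounded_op (gop g s)"
  unfolding gop_def by (rule bop_comp(1)[OF mult_op_bop V_bop])

inductive_set Dset :: "'x op set" where
  gen: "g \<in> linfty \<Longrightarrow> gop g s \<in> Dset"
| plus: "A \<in> Dset \<Longrightarrow> B \<in> Dset \<Longrightarrow> op_plus A B \<in> Dset"

lemma D_bop: "A \<in> Dset \<Longrightarrow> is_bounded_op A"
proof (induction rule: Dset.induct)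
  case (gen g s) then show ?case by (rule gop_bop)
next
  case (plus A B) show ?case by (rule bop_plus(1)[OF plus.IH])
qed

lemma D_scale: "A \<in> Dset \<Longrightarrow> op_scale c A \<in> Dset"
proof (induction rule: Dset.induct)
  case (gen g s)
  then show ?case unfolding gop_def scale_comp scale_mult unfolding gop_def[symmetric] by (intro Dset.gen scale_linfty)
next
  case (plus A B)
  show ?case unfolding scale_plus by (rule Dset.plus[OF plus.IH])
qed

lemma D_minus: "A \<in> Dset \<Longrightarrow> B \<in> Dset \<Longrightarrow> op_minus A B \<in> Dset"
  unfolding op_minus_alt by (intro Dset.plus D_scale)

lemma gen_comp:
  assumes g: "g \<in> linfty" and h: "h \<in> linfty"
  shows "(mult_op g \<circ> Vop \<alpha> s) \<circ> (mult_op h \<circ> Vop \<alpha> t) = mult_op (\<lambda>x. g x * tr s h x) \<circ> Vop \<alpha> (mult s t)"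
proof -
  have "(mult_op g \<circ> Vop \<alpha> s) \<circ> (mult_op h \<circ> Vop \<alpha> t) = mult_op g \<circ> (Vop \<alpha> s \<circ> mult_op h) \<circ> Vop \<alpha> t"
    by (simp add: o_assoc)
  also have "\<dots> = (mult_op g \<circ> mult_op (tr s h)) \<circ> (Vop \<alpha> s \<circ> Vop \<alpha> t)"
    unfolding Vop_mult[OF h] by (simp add: o_assoc)
  also have "\<dots> = mult_op (\<lambda>x. g x * tr s h x) \<circ> Vop \<alpha> (mult s t)"
    unfolding mult_comp[OF g tr_linfty[OF h]] Vop_comp ..
  finally show ?thesis .
qed

lemma D_comp: "A \<in> Dset \<Longrightarrow> B \<in> Dset \<Longrightarrow> A \<circ> B \<in> Dset"
proof (induction A arbitrary: B rule: Dset.induct)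
  case (gen g s)
  from gen(2) show ?case
  proof (induction B rule: Dset.induct)
    case (gen h t)
    show ?case unfolding gop_def gen_comp[OF \<open>g \<in> linfty\<close> gen] unfolding gop_def[symmetric]
      by (intro Dset.gen mult_linfty tr_linfty gen \<open>g \<in> linfty\<close>)
  next
    case (plus B1 B2)
    have eq: "gop g s \<circ> op_plus B1 B2 = op_plus (gop g s \<circ> B1) (gop g s \<circ> B2)"
      by (rule comp_plus_right[OF gop_bop[OF \<open>g \<in> linfty\<close>] D_bop[OF plus.hyps(1)] D_bop[OF plus.hyps(2)]])
    show ?case unfolding eq by (rule Dset.plus[OF plus.IH])
  qed
next
  case (plus A1 A2)
  show ?case unfolding comp_plus_left by (intro Dset.plus plus.IH plus.prems)
qed

lemma D_adj: "A \<in> Dset \<Longrightarrow> adjx A \<in> Dset"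
proof (induction rule: Dset.induct)
  case (gen g s)
  then obtain t where "adjx (mult_op g \<circ> Vop \<alpha> s) = mult_op (kf g s) \<circ> Vop \<alpha> t" using adj_gen by blast
  then have "adjx (gop g s) = gop (kf g s) t" unfolding gop_def .
  then show ?case using kf_linfty[OF gen] by (simp add: Dset.gen)
next
  case (plus A B)
  show ?case unfolding adjx_plus[OF D_bop[OF plus.hyps(1)] D_bop[OF plus.hyps(2)]] by (rule Dset.plus[OF plus.IH])
qed

definition Aset :: "'x op set" where
  "Aset = {T. is_bounded_op T \<and> (\<forall>\<epsilon>>0. \<exists>B\<in>Dset. opnorm (op_minus T B) < \<epsilon>)}"

lemma D_A: "B \<in> Dset \<Longrightarrow> B \<in> Aset"
proof -
  assume B: "B \<in> Dset"
  have "opnorm (op_minus B B) = 0" unfolding op_minus_self by (rule bop_zop(2))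
  then have "\<forall>\<epsilon>>0. \<exists>C\<in>Dset. opnorm (op_minus B C) < \<epsilon>"
    by (intro allI impI bexI[of _ B]) (use B in simp_all)
  then show ?thesis unfolding Aset_def using D_bop[OF B] by blast
qed

lemma minus_tri: "op_minus T C = op_plus (op_minus T B) (op_minus B C)"
  unfolding op_minus_def op_plus_def by (intro ext) simp

lemma A_approx: "T \<in> Aset \<Longrightarrow> 0 < \<epsilon> \<Longrightarrow> \<exists>B\<in>Dset. opnorm (op_minus T B) < \<epsilon>"
  unfolding Aset_def by blast

lemma A_bop: "T \<in> Aset \<Longrightarrow> is_bounded_op T"
  unfolding Aset_def by blast

lemma AsetI: "is_bounded_op T \<Longrightarrow> (\<And>\<epsilon>. 0 < \<epsilon> \<Longrightarrow> \<exists>B\<in>Dset. opnorm (op_minus T B) < \<epsilon>) \<Longrightarrow> T \<in> Aset"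
  unfolding Aset_def by blast

lemma A_plus: assumes S: "S \<in> Aset" and T: "T \<in> Aset" shows "op_plus S T \<in> Aset"
proof -
  have Sb: "is_bounded_op S" and Tb: "is_bounded_op T" using A_bop S T by auto
  show ?thesis
  proof (rule AsetI)
    show "is_bounded_op (op_plus S T)" by (rule bop_plus(1)[OF Sb Tb])
    fix \<epsilon> :: real assume e: "0 < \<epsilon>"
    have e2: "0 < \<epsilon>/2" using e by simp
    obtain B where B: "B \<in> Dset" "opnorm (op_minus S B) < \<epsilon>/2" using A_approx[OF S e2] by blast
    obtain C where C: "C \<in> Dset" "opnorm (op_minus T C) < \<epsilon>/2" using A_approx[OF T e2] by blast
    have eq: "op_minus (op_plus S T) (op_plus B C) = op_plus (op_minus S B) (op_minus T C)"
      unfolding op_minus_def op_plus_def by (intro ext) simp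
    have "opnorm (op_minus (op_plus S T) (op_plus B C)) \<le> opnorm (op_minus S B) + opnorm (op_minus T C)"
      unfolding eq by (rule bop_plus(2)[OF bop_minus(1)[OF Sb D_bop[OF B(1)]] bop_minus(1)[OF Tb D_bop[OF C(1)]]])
    then have "opnorm (op_minus (op_plus S T) (op_plus B C)) < \<epsilon>" using B(2) C(2) by linarith
    then show "\<exists>B\<in>Dset. opnorm (op_minus (op_plus S T) B) < \<epsilon>"
      using Dset.plus[OF B(1) C(1)] by blast
  qed
qed

lemma A_comp: assumes S: "S \<in> Aset" and T: "T \<in> Aset" shows "S \<circ> T \<in> Aset"
proof -
  have Sb: "is_bounded_op S" and Tb: "is_bounded_op T" using A_bop S T by auto
  show ?thesis
  proof (rule AsetI)
    show "is_bounded_op (S \<circ> T)" by (rule bop_comp(1)[OF Sb Tb])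
    fix \<epsilon> :: real assume e: "0 < \<epsilon>"
    define M where "M = opnorm S + opnorm T + 2"
    have nS: "0 \<le> opnorm S" and nT: "0 \<le> opnorm T" using opnorm_facts(1)[OF Sb] opnorm_facts(1)[OF Tb] .
    have M: "M > 0" unfolding M_def using nS nT by simp
    define \<eta> where "\<eta> = min 1 (\<epsilon> / M)"
    have eta: "0 < \<eta>" "\<eta> \<le> 1" "\<eta> \<le> \<epsilon> / M" unfolding \<eta>_def using e M by auto
    obtain B where B: "B \<in> Dset" "opnorm (op_minus S B) < \<eta>" using A_approx[OF S eta(1)] by blast
    obtain C where C: "C \<in> Dset" "opnorm (op_minus T C) < \<eta>" using A_approx[OF T eta(1)] by blast
    have Bb: "is_bounded_op B" and Cb: "is_bounded_op C" using B(1) C(1) D_bop by auto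
    have SBb: "is_bounded_op (op_minus S B)" and TCb: "is_bounded_op (op_minus T C)"
      using bop_minus(1)[OF Sb Bb] bop_minus(1)[OF Tb Cb] .
    have Cn: "opnorm C \<le> opnorm T + \<eta>"
    proof -
      have "C = op_minus T (op_minus T C)" unfolding op_minus_def by (intro ext) simp
      then have "opnorm C \<le> opnorm T + opnorm (op_minus T C)"
        using bop_minus(2)[OF Tb TCb] by simp
      then show ?thesis using C(2) by simp
    qed
    have eq: "op_minus (S \<circ> T) (B \<circ> C) = op_plus (S \<circ> op_minus T C) (op_minus S B \<circ> C)"
      unfolding comp_minus_right[OF Sb Tb Cb] unfolding op_minus_def op_plus_def comp_def
      by (intro ext) simp
    have "opnorm (op_minus (S \<circ> T) (B \<circ> C)) \<le> opnorm (S \<circ> op_minus T C) + opnorm (op_minus S B \<circ> C)"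
      unfolding eq by (rule bop_plus(2)[OF bop_comp(1)[OF Sb TCb] bop_comp(1)[OF SBb Cb]])
    also have "\<dots> \<le> opnorm S * opnorm (op_minus T C) + opnorm (op_minus S B) * opnorm C"
      by (rule add_mono[OF bop_comp(2)[OF Sb TCb] bop_comp(2)[OF SBb Cb]])
    also have "\<dots> \<le> opnorm S * \<eta> + \<eta> * (opnorm T + \<eta>)"
    proof (rule add_mono)
      show "opnorm S * opnorm (op_minus T C) \<le> opnorm S * \<eta>"
        using C(2) nS by (intro mult_left_mono) auto
      show "opnorm (op_minus S B) * opnorm C \<le> \<eta> * (opnorm T + \<eta>)"
        using B(2) Cn opnorm_facts(1)[OF Cb] eta(1) by (intro mult_mono) auto
    qed
    also have "\<dots> < \<eta> * M" unfolding M_def using eta by (simp add: algebra_simps)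
    also have "\<dots> \<le> (\<epsilon> / M) * M" using eta M by (intro mult_right_mono) auto
    also have "\<dots> = \<epsilon>" using M by simp
    finally have "opnorm (op_minus (S \<circ> T) (B \<circ> C)) < \<epsilon>" .
    then show "\<exists>B\<in>Dset. opnorm (op_minus (S \<circ> T) B) < \<epsilon>"
      using D_comp[OF B(1) C(1)] by blast
  qed
qed

lemma A_scale: assumes T: "T \<in> Aset" shows "op_scale c T \<in> Aset"
proof -
  have Tb: "is_bounded_op T" using A_bop T by auto
  show ?thesis
  proof (rule AsetI)
    show "is_bounded_op (op_scale c T)" by (rule bop_scale_op(1)[OF Tb])
    fix \<epsilon> :: real assume e: "0 < \<epsilon>"
    have c1: "0 < cmod c + 1" by (simp add: add_nonneg_pos)
    have e': "0 < \<epsilon> / (cmod c + 1)" using e c1 by (rule divide_pos_pos)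
    obtain B where B: "B \<in> Dset" "opnorm (op_minus T B) < \<epsilon> / (cmod c + 1)"
      using A_approx[OF T e'] by blast
    have eq: "op_minus (op_scale c T) (op_scale c B) = op_scale c (op_minus T B)"
      unfolding op_minus_def op_scale_def by (intro ext) (simp add: right_diff_distrib)
    have "opnorm (op_minus (op_scale c T) (op_scale c B)) \<le> cmod c * opnorm (op_minus T B)"
      unfolding eq by (rule bop_scale_op(2)[OF bop_minus(1)[OF Tb D_bop[OF B(1)]]])
    also have "\<dots> \<le> cmod c * (\<epsilon> / (cmod c + 1))" using B(2) by (intro mult_left_mono) auto
    also have "\<dots> < \<epsilon>"
    proof -
      have "cmod c * (\<epsilon> / (cmod c + 1)) = \<epsilon> * (cmod c / (cmod c + 1))" by simp
      also have "\<dots> < \<epsilon> * 1" using e c1 by (intro mult_strict_left_mono) auto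
      finally show ?thesis by simp
    qed
    finally show "\<exists>B\<in>Dset. opnorm (op_minus (op_scale c T) B) < \<epsilon>"
      using D_scale[OF B(1)] by blast
  qed
qed

lemma A_adj: assumes T: "T \<in> Aset" shows "adj T \<in> Aset"
proof -
  have Tb: "is_bounded_op T" using A_bop T by auto
  show ?thesis unfolding adj_eq[OF Tb]
  proof (rule AsetI)
    show "is_bounded_op (adjx T)" by (rule adjx_bop(1)[OF Tb])
    fix \<epsilon> :: real assume e: "0 < \<epsilon>"
    obtain B where B: "B \<in> Dset" "opnorm (op_minus T B) < \<epsilon>" using A_approx[OF T e] by blast
    have Bb: "is_bounded_op B" using D_bop[OF B(1)] .
    have "opnorm (op_minus (adjx T) (adjx B)) \<le> opnorm (op_minus T B)"
      unfolding adjx_minus[OF Tb Bb, symmetric] by (rule adjx_bop(2)[OF bop_minus(1)[OF Tb Bb]])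
    then have "opnorm (op_minus (adjx T) (adjx B)) < \<epsilon>" using B(2) by linarith
    then show "\<exists>B\<in>Dset. opnorm (op_minus (adjx T) B) < \<epsilon>"
      using D_adj[OF B(1)] by blast
  qed
qed

lemma A_closed:
  assumes Tb: "is_bounded_op T" and ap: "\<forall>\<epsilon>>0. \<exists>B\<in>Aset. opnorm (op_minus T B) < \<epsilon>"
  shows "T \<in> Aset"
proof (rule AsetI[OF Tb])
  fix \<epsilon> :: real assume e: "0 < \<epsilon>"
  have e2: "0 < \<epsilon>/2" using e by simp
  obtain B where B: "B \<in> Aset" "opnorm (op_minus T B) < \<epsilon>/2" using ap e2 by blast
  have Bb: "is_bounded_op B" using A_bop[OF B(1)] .
  obtain C where C: "C \<in> Dset" "opnorm (op_minus B C) < \<epsilon>/2" using A_approx[OF B(1) e2] by blast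
  have "opnorm (op_minus T C) \<le> opnorm (op_minus T B) + opnorm (op_minus B C)"
    unfolding minus_tri[of T C B] by (rule bop_plus(2)[OF bop_minus(1)[OF Tb Bb] bop_minus(1)[OF Bb D_bop[OF C(1)]]])
  then have "opnorm (op_minus T C) < \<epsilon>" using B(2) C(2) by linarith
  then show "\<exists>B\<in>Dset. opnorm (op_minus T B) < \<epsilon>" using C(1) by blast
qed

lemma A_cstar: "is_cstar_subalg Aset"
  unfolding is_cstar_subalg_def
proof (intro conjI ballI allI impI)
  show "Aset \<subseteq> {T. is_bounded_op T}" using A_bop by blast
next
  fix S T assume "S \<in> Aset" "T \<in> Aset"
  then show "op_plus S T \<in> Aset" "S \<circ> T \<in> Aset" by (rule A_plus, rule A_comp)
next
  fix c T assume "T \<in> Aset" then show "op_scale c T \<in> Aset" by (rule A_scale)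
next
  fix T assume "T \<in> Aset" then show "adj T \<in> Aset" by (rule A_adj)
next
  fix T assume "is_bounded_op T \<and> (\<forall>\<epsilon>>0. \<exists>B\<in>Aset. opnorm (op_minus T B) < \<epsilon>)"
  then show "T \<in> Aset" using A_closed by blast
qed

lemma gens_D: "g \<in> linfty \<Longrightarrow> mult_op g \<in> Dset" "Vop \<alpha> s \<in> Dset"
proof -
  show "g \<in> linfty \<Longrightarrow> mult_op g \<in> Dset" using Dset.gen[of g e] unfolding gop_def mult_Ve by simp
  show "Vop \<alpha> s \<in> Dset" using Dset.gen[OF one_linfty, of s] unfolding gop_def one_V .
qed

lemma RX_A: "RX \<alpha> \<subseteq> Aset"
  unfolding RX_def
proof (rule cstar_gen_least[OF A_cstar])
  show "range (Vop \<alpha>) \<union> mult_op ` linfty \<subseteq> Aset"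
    using gens_D D_A by blast
qed

lemma D_RX: "A \<in> Dset \<Longrightarrow> A \<in> RX \<alpha>"
proof (induction rule: Dset.induct)
  case (gen g s)
  have "mult_op g \<in> RX \<alpha>" "Vop \<alpha> s \<in> RX \<alpha>" unfolding RX_def using gen by (auto intro: cstar_gen_gen)
  then show ?case unfolding RX_def gop_def by (rule cstar_gen_closed(2))
next
  case (plus A B)
  show ?case using plus.IH unfolding RX_def by (rule cstar_gen_closed(1))
qed

end




section \<open>Coloring\<close>

lemma coloring:
  fixes \<sigma> :: "'x \<rightharpoonup> 'x"
  assumes inj: "inj_on \<sigma> (dom \<sigma>)"
  shows "\<exists>c::'x \<Rightarrow> nat. (\<forall>x. c x < 3) \<and> (\<forall>x y. \<sigma> x = Some y \<and> y \<noteq> x \<longrightarrow> c x \<noteq> c y)"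
proof -
  define good where "good R \<longleftrightarrow> (\<forall>x i j. (x,i) \<in> R \<and> (x,j) \<in> R \<longrightarrow> i = j) \<and> (\<forall>x i. (x,i) \<in> R \<longrightarrow> i < (3::nat)) \<and>
      (\<forall>x y i j. \<sigma> x = Some y \<and> y \<noteq> x \<and> (x,i) \<in> R \<and> (y,j) \<in> R \<longrightarrow> i \<noteq> j)" for R :: "('x \<times> nat) set"
  have gD1: "i = j" if "good R" "(x,i) \<in> R" "(x,j) \<in> R" for R x i j
    using that unfolding good_def by blast
  have gD2: "i < 3" if "good R" "(x,i) \<in> R" for R x i
    using that unfolding good_def by blast
  have gD3: "i \<noteq> j" if "good R" "\<sigma> x = Some y" "y \<noteq> x" "(x,i) \<in> R" "(y,j) \<in> R" for R x y i j
    using that unfolding good_def by blast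
  define A where "A = {R. good R}"
  have "\<forall>C\<in>chains A. \<Union>C \<in> A"
  proof
    fix C assume C: "C \<in> chains A"
    have two: "\<exists>R\<in>C. p \<in> R \<and> q \<in> R" if pq: "p \<in> \<Union>C" "q \<in> \<Union>C" for p q
    proof -
      obtain R1 R2 where R: "R1 \<in> C" "R2 \<in> C" "p \<in> R1" "q \<in> R2" using pq by blast
      from chainsD[OF C R(1) R(2)] show ?thesis
      proof
        assume "R1 \<subseteq> R2" then show ?thesis using R by blast
      next
        assume "R2 \<subseteq> R1" then show ?thesis using R by blast
      qed
    qed
    have gC: "good R" if "R \<in> C" for R using chainsD2[OF C] that unfolding A_def by blast
    have "good (\<Union>C)" unfolding good_def
    proof (intro conjI allI impI)
      fix x i j assume h: "(x, i) \<in> \<Union>C \<and> (x, j) \<in> \<Union>C"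
      then obtain R where "R \<in> C" "(x,i) \<in> R" "(x,j) \<in> R" using two by blast
      then show "i = j" using gC gD1 by metis
    next
      fix x i assume "(x, i) \<in> \<Union>C"
      then obtain R where "R \<in> C" "(x,i) \<in> R" by blast
      then show "i < 3" using gC gD2 by metis
    next
      fix x y i j assume h: "\<sigma> x = Some y \<and> y \<noteq> x \<and> (x, i) \<in> \<Union>C \<and> (y, j) \<in> \<Union>C"
      then obtain R where R: "R \<in> C" "(x,i) \<in> R" "(y,j) \<in> R" using two by blast
      have "good R" using gC[OF R(1)] .
      then show "i \<noteq> j" using h R gD3 by metis
    qed
    then show "\<Union>C \<in> A" unfolding A_def by simp
  qed
  from Zorn_Lemma[OF this] obtain M where M: "M \<in> A" and max: "\<forall>X\<in>A. M \<subseteq> X \<longrightarrow> X = M" by blast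
  have gM: "good M" using M unfolding A_def by simp
  have sv: "\<And>x i j. (x,i) \<in> M \<Longrightarrow> (x,j) \<in> M \<Longrightarrow> i = j" using gD1[OF gM] by blast
  have pr: "\<And>x y i j. \<sigma> x = Some y \<Longrightarrow> y \<noteq> x \<Longrightarrow> (x,i) \<in> M \<Longrightarrow> (y,j) \<in> M \<Longrightarrow> i \<noteq> j"
    using gD3[OF gM] by blast
  have lt: "\<And>x i. (x,i) \<in> M \<Longrightarrow> i < 3" using gD2[OF gM] by blast
  have tot: "\<exists>i. (x,i) \<in> M" for x
  proof (rule ccontr)
    assume nx: "\<not> (\<exists>i. (x,i) \<in> M)"
    define k1 where "k1 = (SOME j. \<exists>y. \<sigma> x = Some y \<and> (y,j) \<in> M)"
    define k2 where "k2 = (SOME j. \<exists>z. \<sigma> z = Some x \<and> (z,j) \<in> M)"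
    have k1: "j = k1" if yj: "\<sigma> x = Some y" "(y,j) \<in> M" for y j
    proof -
      have "\<exists>y. \<sigma> x = Some y \<and> (y,k1) \<in> M" unfolding k1_def by (rule someI[of _ j]) (use yj in blast)
      then obtain y' where "\<sigma> x = Some y'" "(y',k1) \<in> M" by blast
      then show ?thesis using yj sv by auto
    qed
    have k2: "j = k2" if zj: "\<sigma> z = Some x" "(z,j) \<in> M" for z j
    proof -
      have "\<exists>z. \<sigma> z = Some x \<and> (z,k2) \<in> M" unfolding k2_def by (rule someI[of _ j]) (use zj in blast)
      then obtain z' where z': "\<sigma> z' = Some x" "(z',k2) \<in> M" by blast
      have "z' \<in> dom \<sigma>" "z \<in> dom \<sigma>" using z'(1) zj(1) by auto
      then have "z' = z" using inj z'(1) zj(1) unfolding inj_on_def by metis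
      then show ?thesis using zj z' sv by auto
    qed
    have "\<exists>i::nat. i < 3 \<and> i \<noteq> k1 \<and> i \<noteq> k2" by presburger
    then obtain i :: nat where i: "i < 3" "i \<noteq> k1" "i \<noteq> k2" by blast
    define M' where "M' = insert (x,i) M"
    have "good M'" unfolding good_def M'_def
    proof (intro conjI allI impI)
      fix x' i' j' assume "(x', i') \<in> insert (x, i) M \<and> (x', j') \<in> insert (x, i) M"
      then show "i' = j'" using nx sv by auto
    next
      fix x' i' assume "(x', i') \<in> insert (x, i) M" then show "i' < 3" using i lt by auto
    next
      fix x' y i' j' assume h: "\<sigma> x' = Some y \<and> y \<noteq> x' \<and> (x', i') \<in> insert (x, i) M \<and> (y, j') \<in> insert (x, i) M"
      show "i' \<noteq> j'"
      proof (cases "x' = x")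
        case True
        then have "i' = i" using h nx by blast
        moreover have "(y, j') \<in> M" using h True by auto
        ultimately show ?thesis using k1[of y j'] h True i by auto
      next
        case False
        then have xM: "(x', i') \<in> M" using h by blast
        show ?thesis
        proof (cases "y = x")
          case True
          then have "j' = i" using h nx by blast
          moreover have "i' = k2" using k2[of x' i'] h True xM by auto
          ultimately show ?thesis using i by auto
        next
          case False
          then have "(y, j') \<in> M" using h by blast
          then show ?thesis using pr h xM by blast
        qed
      qed
    qed
    then have "M' \<in> A" unfolding A_def by simp
    moreover have "M \<subseteq> M'" unfolding M'_def by blast
    ultimately have "M' = M" using max by simp
    then show False using nx unfolding M'_def by blast
  qed
  define c where "c x = (SOME i. (x,i) \<in> M)" for x
  have cM: "(x, c x) \<in> M" for x unfolding c_def using tot[of x] by (rule someI_ex)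
  have "\<forall>x y. \<sigma> x = Some y \<and> y \<noteq> x \<longrightarrow> c x \<noteq> c y" using cM pr by blast
  moreover have "\<forall>x. c x < 3" using cM lt by blast
  ultimately show ?thesis by blast
qed




definition diag :: "'x op \<Rightarrow> 'x vec" where "diag T x = T (dl x) x"

lemma diag_bound:
  assumes T: "is_bounded_op T"
  shows "cmod (diag T x) \<le> opnorm T" "diag T \<in> linfty"
proof -
  have b: "cmod (diag T y) \<le> opnorm T" for y
  proof -
    have "cmod (diag T y) \<le> l2norm (T (dl y))" unfolding diag_def by (rule cmod_le_l2norm[OF bop_ell2[OF T dl_ell2(1)]])
    also have "\<dots> \<le> opnorm T * l2norm (dl y)" by (rule opnorm_facts(2)[OF T dl_ell2(1)])
    also have "\<dots> = opnorm T" unfolding dl_ell2(2) by simp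
    finally show ?thesis .
  qed
  then show "cmod (diag T x) \<le> opnorm T" .
  show "diag T \<in> linfty" unfolding linfty_def using b by blast
qed

lemma proj_sum:
  assumes T: "is_bounded_op T" and f: "f \<in> ell2" and F: "finite F"
  shows "(\<lambda>y. \<Sum>x\<in>F. proj x (T (proj x f)) y) = (\<lambda>y. if y \<in> F then diag T y * f y else 0)"
proof -
  have px: "proj x f = (\<lambda>y. f x * dl x y)" for x unfolding proj_def dl_def using f by auto
  have tx: "T (proj x f) = (\<lambda>y. f x * T (dl x) y)" for x unfolding px by (rule bop_scale[OF T dl_ell2(1)])
  have tl: "T (proj x f) \<in> ell2" for x unfolding tx by (rule l2norm_scale(1)[OF bop_ell2[OF T dl_ell2(1)]])
  have pp: "proj x (T (proj x f)) y = (if y = x then f x * diag T x else 0)" for x y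
  proof -
    have "proj x (T (proj x f)) = (\<lambda>y. if y = x then T (proj x f) x else 0)"
      by (simp only: proj_def[of x "T (proj x f)"] if_P[OF tl])
    then show ?thesis unfolding diag_def by (simp add: tx)
  qed
  show ?thesis unfolding pp using F by (intro ext) (simp add: mult.commute)
qed

lemma condexp_eq:
  assumes T: "is_bounded_op T"
  shows "condexp T = mult_op (diag T)"
proof (rule ext)
  fix f :: "'a vec"
  show "condexp T f = mult_op (diag T) f"
  proof (cases "f \<in> ell2")
    case False then show ?thesis unfolding condexp_def mult_op_def by simp
  next
    case f: True
    define d where "d = diag T"
    define g where "g = (\<lambda>y. d y * f y)"
    define K where "K = opnorm T"
    have K: "0 \<le> K" unfolding K_def by (rule opnorm_facts(1)[OF T])
    have dK: "cmod (d y) \<le> K" for y unfolding d_def K_def by (rule diag_bound(1)[OF T])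
    have g: "g \<in> ell2" unfolding g_def using mult_op_norm(1)[of d K, OF dK f] mult_op_in[OF f] by simp
    have S: "(\<lambda>y. (\<Sum>x\<in>F. proj x (T (proj x f)) y)) = (\<lambda>y. if y \<in> F then d y * f y else 0)"
      if "finite F" for F unfolding d_def by (rule proj_sum[OF T f that])
    have Sell: "(\<lambda>y. if y \<in> F then d y * f y else 0) \<in> ell2" if "finite F" for F by (rule fs_ell2[OF that])
    let ?P = "\<lambda>g. g \<in> ell2 \<and> (\<forall>\<epsilon>>0. \<exists>F0. finite F0 \<and> (\<forall>F. finite F \<and> F0 \<subseteq> F \<longrightarrow>
             l2norm (\<lambda>y. (\<Sum>x\<in>F. proj x (T (proj x f)) y) - g y) < \<epsilon>))"
    have diffeq: "l2norm (\<lambda>y. (\<Sum>x\<in>F. proj x (T (proj x f)) y) - g' y) =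
        l2norm (\<lambda>y. (if y \<in> F then d y * f y else 0) - g' y)" if "finite F" for F g'
    proof -
      have "(\<lambda>y. (\<Sum>x\<in>F. proj x (T (proj x f)) y) - g' y) = (\<lambda>y. (if y \<in> F then d y * f y else 0) - g' y)"
        using fun_cong[OF S[OF that]] by (intro ext) simp
      then show ?thesis by simp
    qed
    have Pg: "?P g"
    proof (intro conjI allI impI g)
      fix \<epsilon> :: real assume e: "0 < \<epsilon>"
      have e': "0 < \<epsilon> / (K + 1)" using e K by simp
      obtain F0 where F0: "finite F0" "\<And>F. finite F \<Longrightarrow> F0 \<subseteq> F \<Longrightarrow> l2norm (\<lambda>x. if x \<in> F then 0 else f x) < \<epsilon> / (K + 1)"
        using tail_small[OF f e'] by blast
      have "l2norm (\<lambda>y. (\<Sum>x\<in>F. proj x (T (proj x f)) y) - g y) < \<epsilon>" if F: "finite F" "F0 \<subseteq> F" for F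
      proof -
        define tl where "tl = (\<lambda>x. if x \<in> F then 0 else f x)"
        have tle: "tl \<in> ell2" unfolding tl_def by (rule l2norm_dom(1)[OF f]) auto
        have dom: "cmod ((if y \<in> F then d y * f y else 0) - g y) \<le> cmod (complex_of_real K * tl y)" for y
          unfolding g_def tl_def using dK[of y] K by (auto simp: norm_mult mult_right_mono)
        have "l2norm (\<lambda>y. (\<Sum>x\<in>F. proj x (T (proj x f)) y) - g y) = l2norm (\<lambda>y. (if y \<in> F then d y * f y else 0) - g y)"
          by (rule diffeq[OF F(1)])
        also have "\<dots> \<le> l2norm (\<lambda>y. complex_of_real K * tl y)"
          by (rule l2norm_dom(2)[OF l2norm_scale(1)[OF tle] dom])
        also have "\<dots> = K * l2norm tl" using l2norm_scale(2)[OF tle, of "complex_of_real K"] K by simp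
        also have "\<dots> \<le> K * (\<epsilon> / (K + 1))" using F0(2)[OF F] K unfolding tl_def by (intro mult_left_mono) auto
        also have "\<dots> < \<epsilon>"
        proof -
          have "K * (\<epsilon> / (K + 1)) = \<epsilon> * (K / (K + 1))" by simp
          also have "\<dots> < \<epsilon> * 1" using e K by (intro mult_strict_left_mono) auto
          finally show ?thesis by simp
        qed
        finally show ?thesis .
      qed
      then show "\<exists>F0. finite F0 \<and> (\<forall>F. finite F \<and> F0 \<subseteq> F \<longrightarrow>
             l2norm (\<lambda>y. (\<Sum>x\<in>F. proj x (T (proj x f)) y) - g y) < \<epsilon>)" using F0(1) by blast
    qed
    have uniq: "g' = g" if Pg': "?P g'" for g'
    proof -
      have g': "g' \<in> ell2" using Pg' by blast
      have "l2norm (\<lambda>y. g' y - g y) \<le> 0 + \<epsilon>" if e: "0 < \<epsilon>" for \<epsilon>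
      proof -
        have e2: "0 < \<epsilon>/2" using e by simp
        obtain F1 where F1: "finite F1" "\<forall>F. finite F \<and> F1 \<subseteq> F \<longrightarrow> l2norm (\<lambda>y. (\<Sum>x\<in>F. proj x (T (proj x f)) y) - g' y) < \<epsilon>/2"
          using Pg' e2 by blast
        obtain F2 where F2: "finite F2" "\<forall>F. finite F \<and> F2 \<subseteq> F \<longrightarrow> l2norm (\<lambda>y. (\<Sum>x\<in>F. proj x (T (proj x f)) y) - g y) < \<epsilon>/2"
          using Pg e2 by blast
        define F where "F = F1 \<union> F2"
        have F: "finite F" unfolding F_def using F1 F2 by simp
        define h where "h = (\<lambda>y. if y \<in> F then d y * f y else 0)"
        have h: "h \<in> ell2" unfolding h_def by (rule Sell[OF F])
        have a1: "l2norm (\<lambda>y. h y - g' y) < \<epsilon>/2" using F1(2) F diffeq[OF F, of g'] unfolding h_def F_def by auto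
        have a2: "l2norm (\<lambda>y. h y - g y) < \<epsilon>/2" using F2(2) F diffeq[OF F, of g] unfolding h_def F_def by auto
        have "l2norm (\<lambda>y. g' y - g y) \<le> l2norm (\<lambda>y. g' y - h y) + l2norm (\<lambda>y. h y - g y)"
          by (rule l2norm_tri[OF g' h g])
        also have "l2norm (\<lambda>y. g' y - h y) = l2norm (\<lambda>y. h y - g' y)"
          using l2norm_neg[of "\<lambda>y. h y - g' y"] by simp
        finally show ?thesis using a1 a2 by simp
      qed
      then have "l2norm (\<lambda>y. g' y - g y) \<le> 0" by (rule field_le_epsilon)
      then have "l2norm (\<lambda>y. g' y - g y) = 0" using l2norm_nonneg[of "\<lambda>y. g' y - g y"] by linarith
      then have "(\<lambda>y. g' y - g y) = (\<lambda>_. 0)" by (rule l2norm_eq0[OF l2norm_minus(1)[OF g' g]])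
      then show ?thesis by (intro ext) (metis eq_iff_diff_eq_0)
    qed
    have "(THE g. ?P g) = g" by (rule the_equality[where P="?P", OF Pg uniq])
    then show ?thesis unfolding condexp_def using f by (simp add: mult_op_in g_def d_def)
  qed
qed

lemma mult_op_minus: "mult_op (\<lambda>x. a x - b x) = op_minus (mult_op a) (mult_op b)"
  unfolding mult_op_def op_minus_def by (intro ext) (simp add: left_diff_distrib)

lemma mult_op_plus: "mult_op (\<lambda>x. a x + b x) = op_plus (mult_op a) (mult_op b)"
  unfolding mult_op_def op_plus_def by (intro ext) (simp add: distrib_right)

lemma diag_minus: "diag (op_minus T B) = (\<lambda>x. diag T x - diag B x)"
  unfolding diag_def op_minus_def ..

lemma diag_plus: "diag (op_plus T B) = (\<lambda>x. diag T x + diag B x)"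
  unfolding diag_def op_plus_def ..

lemma condexp_minus: "is_bounded_op T \<Longrightarrow> is_bounded_op B \<Longrightarrow>
    condexp (op_minus T B) = op_minus (condexp T) (condexp B)"
  by (simp add: condexp_eq bop_minus(1) diag_minus mult_op_minus)

lemma condexp_plus: "is_bounded_op T \<Longrightarrow> is_bounded_op B \<Longrightarrow>
    condexp (op_plus T B) = op_plus (condexp T) (condexp B)"
  by (simp add: condexp_eq bop_plus(1) diag_plus mult_op_plus)

lemma condexp_norm: "is_bounded_op T \<Longrightarrow> opnorm (condexp T) \<le> opnorm T"
  unfolding condexp_eq[of T] by (intro mult_op_opnorm diag_bound opnorm_facts(1))




definition ind :: "'x set \<Rightarrow> 'x vec" where "ind A x = (if x \<in> A then 1 else 0)"

lemma ind_linfty: "ind A \<in> linfty"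
proof -
  have "cmod (ind A x) \<le> 1" for x unfolding ind_def by simp
  then show ?thesis unfolding linfty_def by blast
qed

lemma P_idem: "mult_op (ind A) \<circ> mult_op (ind A) = mult_op (ind A)"
proof -
  have "(\<lambda>x. ind A x * ind A x) = ind A" unfolding ind_def by (intro ext) simp
  then show ?thesis using mult_comp[OF ind_linfty ind_linfty, of A A] by simp
qed

lemma P_split: "mult_op (ind A) = op_plus (mult_op (ind (A \<inter> B))) (mult_op (ind (A - B)))"
proof -
  have "ind A = (\<lambda>x. ind (A \<inter> B) x + ind (A - B) x)" unfolding ind_def by (intro ext) simp
  then show ?thesis using mult_op_plus[of "ind (A \<inter> B)" "ind (A - B)"] by simp
qed

lemma T_split:
  assumes T: "is_bounded_op T"
  shows "T \<circ> mult_op (ind A) = op_plus (T \<circ> mult_op (ind (A \<inter> B))) (T \<circ> mult_op (ind (A - B)))"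
  by (subst P_split[of A B]) (rule comp_plus_right[OF T mult_op_bop[OF ind_linfty] mult_op_bop[OF ind_linfty]])

lemma T_univ:
  assumes T: "is_bounded_op T"
  shows "T \<circ> mult_op (ind UNIV) = T"
proof (rule ext)
  fix f :: "'a vec"
  show "(T \<circ> mult_op (ind UNIV)) f = T f"
  proof (cases "f \<in> ell2")
    case True then show ?thesis by (simp add: mult_op_in ind_def)
  next
    case False then show ?thesis by (simp add: mult_op_out bop_out[OF T] bop_zero[OF T])
  qed
qed

context irep begin

lemma RX_mult: "g \<in> linfty \<Longrightarrow> mult_op g \<in> RX \<alpha>"
  unfolding RX_def by (rule cstar_gen_gen) blast

lemma RX_comp: "A \<in> RX \<alpha> \<Longrightarrow> B \<in> RX \<alpha> \<Longrightarrow> A \<circ> B \<in> RX \<alpha>"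
  unfolding RX_def by (rule cstar_gen_closed(2))

lemma RX_plus: "A \<in> RX \<alpha> \<Longrightarrow> B \<in> RX \<alpha> \<Longrightarrow> op_plus A B \<in> RX \<alpha>"
  unfolding RX_def by (rule cstar_gen_closed(1))

lemma RX_minus: "A \<in> RX \<alpha> \<Longrightarrow> B \<in> RX \<alpha> \<Longrightarrow> op_minus A B \<in> RX \<alpha>"
  unfolding RX_def by (rule cstar_gen_closed(4))

lemma RX_scale: "A \<in> RX \<alpha> \<Longrightarrow> op_scale c A \<in> RX \<alpha>"
  unfolding RX_def by (rule cstar_gen_closed(3)) 

lemma RX_condexp: "is_bounded_op T \<Longrightarrow> condexp T \<in> RX \<alpha>"
  unfolding condexp_eq by (intro RX_mult diag_bound)

lemma gopP_apply:
  assumes f: "f \<in> ell2"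
  shows "(gop g s \<circ> mult_op (ind A)) f =
    (\<lambda>y. g y * (if \<exists>x. \<alpha> s x = Some y then ind A (ainv \<alpha> s y) * f (ainv \<alpha> s y) else 0))"
proof -
  have pf: "mult_op (ind A) f = (\<lambda>x. ind A x * f x)" by (rule mult_op_in[OF f])
  have pe: "(\<lambda>x. ind A x * f x) \<in> ell2" using bop_ell2[OF mult_op_bop[OF ind_linfty[of A]] f] unfolding pf .
  have ve: "Vop \<alpha> s (\<lambda>x. ind A x * f x) \<in> ell2" by (rule bop_ell2[OF V_bop pe])
  show ?thesis unfolding comp_def gop_def pf unfolding mult_op_in[OF ve] unfolding Vop_in[OF pe] ..
qed

lemma cell_zero:
  assumes g: "g \<in> linfty" and N: "\<And>x y. \<alpha> s x = Some y \<Longrightarrow> x \<in> N \<Longrightarrow> y \<notin> N"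
  shows "mult_op (ind N) \<circ> (gop g s \<circ> mult_op (ind N)) = zop"
proof (rule ext)
  fix f :: "'x vec"
  show "(mult_op (ind N) \<circ> (gop g s \<circ> mult_op (ind N))) f = zop f"
  proof (cases "f \<in> ell2")
    case False
    then show ?thesis using bop_zero[OF gop_bop[OF g]] by (simp add: mult_op_out zop_def mult_op_in)
  next
    case True
    have e: "(gop g s \<circ> mult_op (ind N)) f \<in> ell2"
      by (rule bop_ell2[OF bop_comp(1)[OF gop_bop[OF g] mult_op_bop[OF ind_linfty]] True])
    have z: "ind N y * (g y * (if \<exists>x. \<alpha> s x = Some y then ind N (ainv \<alpha> s y) * f (ainv \<alpha> s y) else 0)) = 0" for y
    proof (cases "y \<in> N \<and> (\<exists>x. \<alpha> s x = Some y)")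
      case True
      then obtain x where x: "\<alpha> s x = Some y" and yN: "y \<in> N" by blast
      have "ainv \<alpha> s y = x" by (rule ainv[OF x])
      moreover have "x \<notin> N" using N[OF x] yN by blast
      ultimately show ?thesis by (simp add: ind_def)
    next
      case False then show ?thesis by (auto simp: ind_def)
    qed
    have e': "gop g s (mult_op (ind N) f) \<in> ell2" using e by simp
    show ?thesis unfolding comp_def zop_def unfolding mult_op_in[OF e']
      unfolding gopP_apply[OF True, unfolded comp_def] by (rule ext, rule z)
  qed
qed

lemma gop_fix:
  assumes g: "g \<in> linfty"
  shows "gop g s \<circ> mult_op (ind {x. \<alpha> s x = Some x}) = mult_op (\<lambda>x. g x * ind {x. \<alpha> s x = Some x} x)"
proof (rule ext)
  fix f :: "'x vec"
  let ?F = "{x. \<alpha> s x = Some x}"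
  show "(gop g s \<circ> mult_op (ind ?F)) f = mult_op (\<lambda>x. g x * ind ?F x) f"
  proof (cases "f \<in> ell2")
    case False
    then show ?thesis using bop_zero[OF gop_bop[OF g]] by (simp add: mult_op_out)
  next
    case True
    have pw: "g y * (if \<exists>x. \<alpha> s x = Some y then ind ?F (ainv \<alpha> s y) * f (ainv \<alpha> s y) else 0) = g y * ind ?F y * f y" for y
    proof (cases "\<exists>x. \<alpha> s x = Some y")
      case True
      then obtain x where x: "\<alpha> s x = Some y" by blast
      have ax: "ainv \<alpha> s y = x" by (rule ainv[OF x])
      show ?thesis
      proof (cases "x = y")
        case True then show ?thesis using x ax by (auto simp: ind_def)
      next
        case False
        have "\<alpha> s y \<noteq> Some y"
        proof
          assume "\<alpha> s y = Some y" then have "y = x" using inj_eq[OF x] by blast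
          then show False using False by simp
        qed
        moreover have "\<alpha> s x \<noteq> Some x" using x False by simp
        ultimately show ?thesis using ax True by (simp add: ind_def)
      qed
    next
      case False
      then have "\<alpha> s y \<noteq> Some y" by blast
      then show ?thesis using False by (simp add: ind_def)
    qed
    show ?thesis unfolding gopP_apply[OF True] mult_op_in[OF True] by (rule ext) (rule pw)
  qed
qed

lemma condexp_gop:
  assumes g: "g \<in> linfty"
  shows "condexp (gop g s) = mult_op (\<lambda>x. g x * ind {x. \<alpha> s x = Some x} x)"
proof -
  have "diag (gop g s) = (\<lambda>x. g x * ind {x. \<alpha> s x = Some x} x)"
  proof (rule ext)
    fix x
    show "diag (gop g s) x = g x * ind {x. \<alpha> s x = Some x} x"
      unfolding diag_def gop_def gen_delta by (cases "\<alpha> s x") (auto simp: ind_def)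
  qed
  then show ?thesis unfolding condexp_eq[OF gop_bop[OF g]] by simp
qed

end

locale trace_ctx = irep mult e \<alpha> for mult :: "'s \<Rightarrow> 's \<Rightarrow> 's" and e and \<alpha> :: "'s \<Rightarrow> ('x \<rightharpoonup> 'x)" +
  fixes \<phi> :: "'x op \<Rightarrow> complex"
  assumes phi_add: "\<forall>A\<in>RX \<alpha>. \<forall>B\<in>RX \<alpha>. \<phi> (op_plus A B) = \<phi> A + \<phi> B"
    and phi_scale: "\<forall>c. \<forall>A\<in>RX \<alpha>. \<phi> (op_scale c A) = c * \<phi> A"
    and phi_trace: "\<forall>A\<in>RX \<alpha>. \<forall>B\<in>RX \<alpha>. \<phi> (A \<circ> B) = \<phi> (B \<circ> A)"
begin

lemma phi_plus: "A \<in> RX \<alpha> \<Longrightarrow> B \<in> RX \<alpha> \<Longrightarrow> \<phi> (op_plus A B) = \<phi> A + \<phi> B"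
  using phi_add by blast

lemma phi_minus: "A \<in> RX \<alpha> \<Longrightarrow> B \<in> RX \<alpha> \<Longrightarrow> \<phi> (op_minus A B) = \<phi> A - \<phi> B"
proof -
  assume A: "A \<in> RX \<alpha>" and B: "B \<in> RX \<alpha>"
  have "\<phi> (op_minus A B) = \<phi> A + \<phi> (op_scale (-1) B)" unfolding op_minus_alt
    by (rule phi_plus[OF A RX_scale[OF B]])
  also have "\<phi> (op_scale (-1) B) = - \<phi> B" using phi_scale B by simp
  finally show ?thesis by simp
qed

lemma phi_zop: "\<phi> zop = 0"
proof -
  have z: "mult_op (\<lambda>_. 0) \<in> RX \<alpha>" by (rule RX_mult) (unfold linfty_def, intro CollectI exI[of _ 0], simp)
  have eq: "zop = op_scale 0 (mult_op (\<lambda>_. 0::complex))" unfolding zop_def op_scale_def by simp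
  have "\<phi> (op_scale 0 (mult_op (\<lambda>_. 0::complex))) = 0 * \<phi> (mult_op (\<lambda>_. 0::complex))" using phi_scale z by blast
  then show ?thesis unfolding eq by simp
qed

lemma phi_cell:
  assumes g: "g \<in> linfty" and N: "\<And>x y. \<alpha> s x = Some y \<Longrightarrow> x \<in> N \<Longrightarrow> y \<notin> N"
  shows "\<phi> (gop g s \<circ> mult_op (ind N)) = 0"
proof -
  have T: "gop g s \<in> RX \<alpha>" by (rule D_RX[OF Dset.gen[OF g]])
  have P: "mult_op (ind N) \<in> RX \<alpha>" by (rule RX_mult[OF ind_linfty])
  have TP: "gop g s \<circ> mult_op (ind N) \<in> RX \<alpha>" by (rule RX_comp[OF T P])
  have "\<phi> (gop g s \<circ> mult_op (ind N)) = \<phi> ((gop g s \<circ> mult_op (ind N)) \<circ> mult_op (ind N))"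
    by (simp add: o_assoc[symmetric] P_idem)
  also have "\<dots> = \<phi> (mult_op (ind N) \<circ> (gop g s \<circ> mult_op (ind N)))"
    using phi_trace TP P by blast
  also have "\<dots> = 0" using cell_zero[OF g N] phi_zop by simp
  finally show ?thesis .
qed

lemma phi_gen:
  assumes g: "g \<in> linfty"
  shows "\<phi> (gop g s) = \<phi> (condexp (gop g s))"
proof -
  define Fx where "Fx = {x. \<alpha> s x = Some x}"
  obtain c :: "'x \<Rightarrow> nat" where c3: "\<forall>x. c x < 3" and cc: "\<forall>x y. \<alpha> s x = Some y \<and> y \<noteq> x \<longrightarrow> c x \<noteq> c y"
    using coloring[OF inj[of s]] by blast
  define Z0 where "Z0 = {x. c x = 0}"
  define Z1 where "Z1 = {x. c x = 1}"
  define R where "R = (UNIV - Fx) - Z0"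
  let ?T = "gop g s"
  have Tb: "is_bounded_op ?T" by (rule gop_bop[OF g])
  have T: "?T \<in> RX \<alpha>" by (rule D_RX[OF Dset.gen[OF g]])
  have TP: "?T \<circ> mult_op (ind A) \<in> RX \<alpha>" for A by (rule RX_comp[OF T RX_mult[OF ind_linfty]])
  have e1: "?T = op_plus (?T \<circ> mult_op (ind Fx)) (?T \<circ> mult_op (ind (UNIV - Fx)))"
    using T_split[OF Tb, of UNIV Fx] T_univ[OF Tb] by simp
  have e2: "?T \<circ> mult_op (ind (UNIV - Fx)) = op_plus (?T \<circ> mult_op (ind ((UNIV - Fx) \<inter> Z0))) (?T \<circ> mult_op (ind R))"
    unfolding R_def by (rule T_split[OF Tb])
  have e3: "?T \<circ> mult_op (ind R) = op_plus (?T \<circ> mult_op (ind (R \<inter> Z1))) (?T \<circ> mult_op (ind (R - Z1)))"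
    by (rule T_split[OF Tb])
  have nf: "y \<noteq> x" if "\<alpha> s x = Some y" "x \<in> UNIV - Fx" for x y using that unfolding Fx_def by auto
  have z0: "\<phi> (?T \<circ> mult_op (ind ((UNIV - Fx) \<inter> Z0))) = 0"
  proof (rule phi_cell[OF g])
    fix x y assume "\<alpha> s x = Some y" "x \<in> (UNIV - Fx) \<inter> Z0"
    then show "y \<notin> (UNIV - Fx) \<inter> Z0" using nf cc unfolding Z0_def by force
  qed
  have z1: "\<phi> (?T \<circ> mult_op (ind (R \<inter> Z1))) = 0"
  proof (rule phi_cell[OF g])
    fix x y assume "\<alpha> s x = Some y" "x \<in> R \<inter> Z1"
    then show "y \<notin> R \<inter> Z1" using nf cc unfolding Z1_def R_def by force
  qed
  have z2: "\<phi> (?T \<circ> mult_op (ind (R - Z1))) = 0"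
  proof (rule phi_cell[OF g])
    fix x y assume xy: "\<alpha> s x = Some y" "x \<in> R - Z1"
    show "y \<notin> R - Z1"
    proof
      assume yR: "y \<in> R - Z1"
      have "c x \<noteq> 0" "c x \<noteq> 1" "c y \<noteq> 0" "c y \<noteq> 1" using xy(2) yR unfolding R_def Z0_def Z1_def by auto
      moreover have "c x < 3" "c y < 3" using c3 by blast+
      ultimately have "c x = 2" "c y = 2" by arith+
      moreover have "y \<noteq> x" using nf xy unfolding R_def by blast
      ultimately show False using cc[rule_format, of x y] xy(1) by simp
    qed
  qed
  have "\<phi> ?T = \<phi> (?T \<circ> mult_op (ind Fx)) + \<phi> (?T \<circ> mult_op (ind (UNIV - Fx)))"
    by (subst e1) (rule phi_plus[OF TP TP])
  also have "\<phi> (?T \<circ> mult_op (ind (UNIV - Fx))) = 0"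
    unfolding e2 phi_plus[OF TP TP] z0 unfolding e3 phi_plus[OF TP TP] z1 z2 by simp
  also have "?T \<circ> mult_op (ind Fx) = condexp ?T" unfolding Fx_def gop_fix[OF g] condexp_gop[OF g] ..
  finally show ?thesis by simp
qed

lemma phi_D: "B \<in> Dset \<Longrightarrow> \<phi> B = \<phi> (condexp B)"
proof (induction rule: Dset.induct)
  case (gen g s) then show ?case by (rule phi_gen)
next
  case (plus A B)
  have Ab: "is_bounded_op A" and Bb: "is_bounded_op B" using D_bop plus.hyps by auto
  have "\<phi> (op_plus A B) = \<phi> A + \<phi> B" by (rule phi_plus[OF D_RX[OF plus.hyps(1)] D_RX[OF plus.hyps(2)]])
  also have "\<dots> = \<phi> (condexp A) + \<phi> (condexp B)" using plus.IH by simp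
  also have "\<dots> = \<phi> (op_plus (condexp A) (condexp B))" by (rule phi_plus[symmetric, OF RX_condexp[OF Ab] RX_condexp[OF Bb]])
  also have "\<dots> = \<phi> (condexp (op_plus A B))" unfolding condexp_plus[OF Ab Bb] ..
  finally show ?case .
qed

lemma main:
  assumes bnd: "\<exists>K. \<forall>A\<in>RX \<alpha>. cmod (\<phi> A) \<le> K * opnorm A"
    and T: "T \<in> RX \<alpha>"
  shows "\<phi> T = \<phi> (condexp T)"
proof -
  obtain K where K: "\<forall>A\<in>RX \<alpha>. cmod (\<phi> A) \<le> K * opnorm A" using bnd by blast
  define K' where "K' = max K 0"
  have K': "cmod (\<phi> A) \<le> K' * opnorm A" if "A \<in> RX \<alpha>" "is_bounded_op A" for A
  proof -
    have "cmod (\<phi> A) \<le> K * opnorm A" using K that by blast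
    also have "\<dots> \<le> K' * opnorm A" unfolding K'_def using opnorm_facts(1)[OF that(2)] by (intro mult_right_mono) auto
    finally show ?thesis .
  qed
  have TA: "T \<in> Aset" using RX_A T by blast
  have Tb: "is_bounded_op T" by (rule A_bop[OF TA])
  have "\<phi> T - \<phi> (condexp T) = 0"
  proof (rule small_zero)
    show "0 \<le> 2 * K'" unfolding K'_def by simp
    fix \<epsilon> :: real assume e: "0 < \<epsilon>"
    obtain B where B: "B \<in> Dset" "opnorm (op_minus T B) < \<epsilon>" using A_approx[OF TA e] by blast
    have Bb: "is_bounded_op B" by (rule D_bop[OF B(1)])
    have BR: "B \<in> RX \<alpha>" by (rule D_RX[OF B(1)])
    have TBb: "is_bounded_op (op_minus T B)" by (rule bop_minus(1)[OF Tb Bb])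
    have TBR: "op_minus T B \<in> RX \<alpha>" by (rule RX_minus[OF T BR])
    have eq: "\<phi> T - \<phi> (condexp T) = \<phi> (op_minus T B) - \<phi> (condexp (op_minus T B))"
    proof -
      have "\<phi> (op_minus T B) = \<phi> T - \<phi> B" by (rule phi_minus[OF T BR])
      moreover have "\<phi> (condexp (op_minus T B)) = \<phi> (condexp T) - \<phi> (condexp B)"
        unfolding condexp_minus[OF Tb Bb] by (rule phi_minus[OF RX_condexp[OF Tb] RX_condexp[OF Bb]])
      moreover have "\<phi> B = \<phi> (condexp B)" by (rule phi_D[OF B(1)])
      ultimately show ?thesis by simp
    qed
    have CB: "is_bounded_op (condexp (op_minus T B))" unfolding condexp_eq[OF TBb]
      by (intro mult_op_bop diag_bound TBb)
    have "cmod (\<phi> T - \<phi> (condexp T)) \<le> cmod (\<phi> (op_minus T B)) + cmod (\<phi> (condexp (op_minus T B)))"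
      unfolding eq by (rule norm_triangle_ineq4)
    also have "\<dots> \<le> K' * opnorm (op_minus T B) + K' * opnorm (condexp (op_minus T B))"
      by (intro add_mono K' TBR TBb RX_condexp CB)
    also have "\<dots> \<le> K' * \<epsilon> + K' * \<epsilon>"
    proof -
      have "0 \<le> K'" unfolding K'_def by simp
      moreover have "opnorm (condexp (op_minus T B)) \<le> \<epsilon>" using condexp_norm[OF TBb] B(2) by linarith
      ultimately show ?thesis using B(2) by (intro add_mono mult_left_mono) auto
    qed
    also have "\<dots> = \<epsilon> * (2 * K')" by simp
    finally show "cmod (\<phi> T - \<phi> (condexp T)) \<le> \<epsilon> * (2 * K')" .
  qed
  then show ?thesis by simp
qed

end



theorem mainTheorem15:
  fixes mult :: "'s \<Rightarrow> 's \<Rightarrow> 's" and e :: 's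
    and \<alpha> :: "'s \<Rightarrow> ('x \<rightharpoonup> 'x)"
    and \<phi> :: "'x op \<Rightarrow> complex"
  assumes countable_S: "countable (UNIV :: 's set)"
    and assoc: "\<forall>a b c. mult (mult a b) c = mult a (mult b c)"
    and unit: "\<forall>a. mult e a = a \<and> mult a e = a"
    and inverse: "\<forall>s. \<exists>!t. mult (mult s t) s = s \<and> mult (mult t s) t = t"
    and partial_bij: "\<forall>s. inj_on (\<alpha> s) (dom (\<alpha> s))"
    and hom: "\<forall>s t. \<alpha> (mult s t) = \<alpha> s \<circ>\<^sub>m \<alpha> t"
    and unital: "\<alpha> e = Some"
    and phi_add: "\<forall>A\<in>RX \<alpha>. \<forall>B\<in>RX \<alpha>. \<phi> (op_plus A B) = \<phi> A + \<phi> B"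
    and phi_scale: "\<forall>c. \<forall>A\<in>RX \<alpha>. \<phi> (op_scale c A) = c * \<phi> A"
    and phi_bounded: "\<exists>K. \<forall>A\<in>RX \<alpha>. cmod (\<phi> A) \<le> K * opnorm A"
    and phi_trace: "\<forall>A\<in>RX \<alpha>. \<forall>B\<in>RX \<alpha>. \<phi> (A \<circ> B) = \<phi> (B \<circ> A)"
  shows "\<forall>T\<in>RX \<alpha>. \<phi> T = \<phi> (condexp T)"
proof -
  interpret trace_ctx mult e \<alpha> \<phi>
    by unfold_locales (rule partial_bij hom unital inverse phi_add phi_scale phi_trace)+
  show ?thesis using main[OF phi_bounded] by blast
qed

end
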